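(* Let $\beta_1,\beta_2\ge0$ and for each $n$ let $\mathbf{X}\sim\mathbb{P}_{\beta_1,\mathbf{Q}^{\mathrm{CW}}}$ and $\mathbf{Y}\sim\mathbb{P}_{\beta_2,\mathbf{Q}^{\mathrm{CW}}}$ be independent. Then $\sqrt{n}\,\rho_n\xrightarrow{d}N(0,1)$.
   Context: Ising model: for an $n\times n$ symmetric matrix $\mathbf{Q}_n$ with zero diagonal and $\beta\ge0$, $\mathbb{P}_{\beta,\mathbf{Q}_n}(\mathbf{Z}=\mathbf{z})=Z(\beta,\mathbf{Q}_n)^{-1}\exp\big(\tfrac{\beta}{2}\mathbf{z}^\top\mathbf{Q}_n\mathbf{z}\big)$ for $\mathbf{z}\in\{\pm1\}^n$. Curie–Weiss model: $\mathbf{Q}^{\mathrm{CW}}=\frac1n(\mathbf{1}\mathbf{1}^\top-I_n)$. Sample correlation: $\rho_n=\frac{\sum_{i}(X_i-\overline{\mathbf{X}}_n)(Y_i-\overline{\mathbf{Y}}_n)}{\sqrt{\sum_i(X_i-\overline{\mathbf{X}}_n)^2}\sqrt{\sum_i(Y_i-\overline{\mathbf{Y}}_n)^2}}$, with $\overline{\mathbf{X}}_n,\overline{\mathbf{Y}}_n$ the sample means. *)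

theory Defs
  imports "HOL-Probability.Probability"
begin

definition spins :: "nat \<Rightarrow> (nat \<Rightarrow> real) set" where
  "spins n = PiE {..<n} (\<lambda>_. {-1, 1})"

definition quad_form :: "nat \<Rightarrow> (nat \<Rightarrow> nat \<Rightarrow> real) \<Rightarrow> (nat \<Rightarrow> real) \<Rightarrow> real" where
  "quad_form n Q z = (\<Sum>i<n. \<Sum>j<n. z i * Q i j * z j)"

definition ising_Z :: "nat \<Rightarrow> real \<Rightarrow> (nat \<Rightarrow> nat \<Rightarrow> real) \<Rightarrow> real" where
  "ising_Z n \<beta> Q = (\<Sum>z\<in>spins n. exp (\<beta> / 2 * quad_form n Q z))"

definition ising :: "nat \<Rightarrow> real \<Rightarrow> (nat \<Rightarrow> nat \<Rightarrow> real) \<Rightarrow> (nat \<Rightarrow> real) measure" where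
  "ising n \<beta> Q = point_measure (spins n)
     (\<lambda>z. ennreal (exp (\<beta> / 2 * quad_form n Q z) / ising_Z n \<beta> Q))"

definition Q_CW :: "nat \<Rightarrow> nat \<Rightarrow> nat \<Rightarrow> real" where
  "Q_CW n i j = (if i = j then 0 else 1 / real n)"

definition sample_mean :: "nat \<Rightarrow> (nat \<Rightarrow> real) \<Rightarrow> real" where
  "sample_mean n x = (\<Sum>i<n. x i) / real n"

definition sample_corr :: "nat \<Rightarrow> (nat \<Rightarrow> real) \<Rightarrow> (nat \<Rightarrow> real) \<Rightarrow> real" where
  "sample_corr n x y =
     (\<Sum>i<n. (x i - sample_mean n x) * (y i - sample_mean n y)) /
     (sqrt (\<Sum>i<n. (x i - sample_mean n x)\<^sup>2) * sqrt (\<Sum>i<n. (y i - sample_mean n y)\<^sup>2))"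

end

theory Submission
  imports Defs
begin


definition qb :: "real \<Rightarrow> real \<Rightarrow> real" where "qb a u = (1 + a * u) / 2"
definition Qv :: "nat \<Rightarrow> real \<Rightarrow> (nat \<Rightarrow> real) \<Rightarrow> real" where
  "Qv n a x = (\<Prod>i<n. qb a (x i))"
definition EE :: "nat \<Rightarrow> real \<Rightarrow> real \<Rightarrow> ((nat \<Rightarrow> real) \<Rightarrow> (nat \<Rightarrow> real) \<Rightarrow> 'c::{real_algebra_1,comm_ring_1}) \<Rightarrow> 'c" where
  "EE n a b G = (\<Sum>x\<in>spins n. \<Sum>y\<in>spins n. of_real (Qv n a x * Qv n b y) * G x y)"
definition e1 :: "real \<Rightarrow> real \<Rightarrow> (real \<Rightarrow> real \<Rightarrow> 'c::{real_algebra_1,comm_ring_1}) \<Rightarrow> 'c" where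
  "e1 a b f = (\<Sum>u\<in>{-1,1}. \<Sum>v\<in>{-1,1}. of_real (qb a u * qb b v) * f u v)"

lemma finite_spins[simp]: "finite (spins n)"
  unfolding spins_def by (intro finite_PiE) auto

lemma spins_val: "x \<in> spins n \<Longrightarrow> i < n \<Longrightarrow> x i = -1 \<or> x i = 1"
  unfolding spins_def by (auto simp: PiE_def Pi_def)

lemma sum2_prod:
  fixes g :: "nat \<Rightarrow> real \<Rightarrow> real \<Rightarrow> 'c::comm_semiring_1"
  shows "(\<Sum>x\<in>spins n. \<Sum>y\<in>spins n. \<Prod>i<n. g i (x i) (y i)) = (\<Prod>i<n. \<Sum>u\<in>{-1,1}. \<Sum>v\<in>{-1,1}. g i u v)"
proof -
  have "(\<Sum>y\<in>spins n. \<Prod>i<n. g i (x i) (y i)) = (\<Prod>i<n. \<Sum>v\<in>{-1,1}. g i (x i) v)" for x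
    unfolding spins_def by (rule prod_sum_PiE[symmetric]) auto
  hence "(\<Sum>x\<in>spins n. \<Sum>y\<in>spins n. \<Prod>i<n. g i (x i) (y i)) = (\<Sum>x\<in>spins n. \<Prod>i<n. \<Sum>v\<in>{-1,1}. g i (x i) v)"
    by simp
  also have "\<dots> = (\<Prod>i<n. \<Sum>u\<in>{-1,1}. \<Sum>v\<in>{-1,1}. g i u v)"
    unfolding spins_def by (rule prod_sum_PiE[symmetric]) auto
  finally show ?thesis .
qed

lemma EE_prod:
  "EE n a b (\<lambda>x y. \<Prod>i<n. f i (x i) (y i)) = (\<Prod>i<n. e1 a b (f i))"
proof -
  have "EE n a b (\<lambda>x y. \<Prod>i<n. f i (x i) (y i)) =
     (\<Sum>x\<in>spins n. \<Sum>y\<in>spins n. \<Prod>i<n. of_real (qb a (x i) * qb b (y i)) * f i (x i) (y i))"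
    unfolding EE_def Qv_def
    by (intro sum.cong refl) (simp add: prod.distrib of_real_prod)
  also have "\<dots> = (\<Prod>i<n. e1 a b (f i))"
    unfolding e1_def by (rule sum2_prod)
  finally show ?thesis .
qed

lemma EE_sum: "EE n a b (\<lambda>x y. \<Sum>i\<in>I. G i x y) = (\<Sum>i\<in>I. EE n a b (G i))"
  unfolding EE_def by (simp add: sum_distrib_left sum.swap[of _ I])

lemma EE_cmult: "EE n a b (\<lambda>x y. c * G x y) = c * EE n a b G"
  unfolding EE_def by (simp add: sum_distrib_left mult.left_commute)

lemma EE_add: "EE n a b (\<lambda>x y. G x y + K x y) = EE n a b G + EE n a b K"
  unfolding EE_def by (simp add: distrib_left sum.distrib)

lemma EE_diff: "EE n a b (\<lambda>x y. G x y - K x y) = EE n a b G - EE n a b K"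
  unfolding EE_def by (simp add: right_diff_distrib sum_subtractf)

lemma e1_one: "e1 a b (\<lambda>u v. 1) = 1"
  unfolding e1_def qb_def by (simp flip: of_real_add, simp add: field_simps)

lemma EE_one: "EE n a b (\<lambda>x y. 1) = 1"
  using EE_prod[of n a b "\<lambda>i u v. 1"] by (simp add: e1_one)

lemma EE_pair:
  fixes f :: "real \<Rightarrow> real \<Rightarrow> 'c::{real_algebra_1,comm_ring_1}"
  assumes "i < n" "j < n"
  shows "EE n a b (\<lambda>x y. f (x i) (y i) * f (x j) (y j)) =
     (if i = j then e1 a b (\<lambda>u v. f u v * f u v) else e1 a b f * e1 a b f)"
proof (cases "i = j")
  case True
  have "EE n a b (\<lambda>x y. f (x i) (y i) * f (x j) (y j)) =
        EE n a b (\<lambda>x y. \<Prod>k<n. (if k = i then (\<lambda>u v. f u v * f u v) else (\<lambda>u v. 1)) (x k) (y k))"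
    using True assms by (simp add: if_distrib[where f="\<lambda>g. g _ _"] prod.delta cong: if_cong)
  also have "\<dots> = (\<Prod>k<n. e1 a b (if k = i then (\<lambda>u v. f u v * f u v) else (\<lambda>u v. 1)))"
    by (rule EE_prod)
  also have "\<dots> = e1 a b (\<lambda>u v. f u v * f u v)"
    using assms by (simp add: if_distrib[where f="e1 a b"] e1_one prod.delta cong: if_cong)
  finally show ?thesis using True by simp
next
  case False
  have "EE n a b (\<lambda>x y. f (x i) (y i) * f (x j) (y j)) =
        EE n a b (\<lambda>x y. \<Prod>k<n. (if k = i then f else (\<lambda>u v. 1)) (x k) (y k) * (if k = j then f else (\<lambda>u v. 1)) (x k) (y k))"
    using False assms by (simp add: if_distrib[where f="\<lambda>g. g _ _"] prod.distrib prod.delta cong: if_cong)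
  also have "\<dots> = (\<Prod>k<n. e1 a b (\<lambda>u v. (if k = i then f else (\<lambda>u v. 1)) u v * (if k = j then f else (\<lambda>u v. 1)) u v))"
    by (rule EE_prod)
  also have "\<dots> = (\<Prod>k<n. (if k = i then e1 a b f else 1) * (if k = j then e1 a b f else 1))"
    using False by (intro prod.cong refl) (auto simp: e1_one)
  also have "\<dots> = e1 a b f * e1 a b f"
    using assms by (simp add: prod.distrib prod.delta)
  finally show ?thesis using False by simp
qed

lemma EE_sq_sum:
  fixes f :: "real \<Rightarrow> real \<Rightarrow> 'c::{real_algebra_1,comm_ring_1}"
  assumes "e1 a b f = 0"
  shows "EE n a b (\<lambda>x y. (\<Sum>i<n. f (x i) (y i))^2) = of_nat n * e1 a b (\<lambda>u v. f u v * f u v)"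
proof -
  have "EE n a b (\<lambda>x y. (\<Sum>i<n. f (x i) (y i))^2) =
        EE n a b (\<lambda>x y. \<Sum>i<n. \<Sum>j<n. f (x i) (y i) * f (x j) (y j))"
    by (simp add: power2_eq_square sum_product)
  also have "\<dots> = (\<Sum>i<n. \<Sum>j<n. EE n a b (\<lambda>x y. f (x i) (y i) * f (x j) (y j)))"
    by (simp add: EE_sum)
  also have "\<dots> = (\<Sum>i<n. \<Sum>j<n. if i = j then e1 a b (\<lambda>u v. f u v * f u v) else 0)"
    using assms by (intro sum.cong refl) (simp add: EE_pair)
  also have "\<dots> = of_nat n * e1 a b (\<lambda>u v. f u v * f u v)"
    by simp
  finally show ?thesis .
qed

lemma e1_real: fixes f :: "real \<Rightarrow> real \<Rightarrow> real"
  shows "e1 a b f = qb a (-1) * qb b (-1) * f (-1) (-1) + qb a (-1) * qb b 1 * f (-1) 1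
     + qb a 1 * qb b (-1) * f 1 (-1) + qb a 1 * qb b 1 * f 1 1"
  unfolding e1_def by simp

lemma qb_nonneg: "\<bar>a\<bar> \<le> 1 \<Longrightarrow> u \<in> {-1,1} \<Longrightarrow> qb a u \<ge> 0"
  unfolding qb_def by auto

lemma Qv_nonneg: "\<bar>a\<bar> \<le> 1 \<Longrightarrow> x \<in> spins n \<Longrightarrow> Qv n a x \<ge> 0"
  unfolding Qv_def by (intro prod_nonneg) (use spins_val qb_nonneg in blast)

lemma norm_e1:
  fixes f :: "real \<Rightarrow> real \<Rightarrow> 'c::real_normed_field"
  assumes "\<bar>a\<bar> \<le> 1" "\<bar>b\<bar> \<le> 1"
  shows "norm (e1 a b f) \<le> e1 a b (\<lambda>u v. norm (f u v))"
proof -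
  have "norm (e1 a b f) \<le> (\<Sum>u\<in>{-1,1}. \<Sum>v\<in>{-1,1}. norm (of_real (qb a u * qb b v) * f u v))"
    unfolding e1_def by (rule order.trans[OF norm_sum sum_mono[OF norm_sum]])
  also have "\<dots> = e1 a b (\<lambda>u v. norm (f u v))"
    unfolding e1_def
  proof (intro sum.cong refl)
    fix u v assume "u \<in> {-1,1::real}" "v \<in> {-1,1::real}"
    hence "qb a u \<ge> 0" "qb b v \<ge> 0" using qb_nonneg assms by auto
    thus "norm (of_real (qb a u * qb b v) * f u v) = of_real (qb a u * qb b v) * norm (f u v)"
      by (simp add: norm_mult)
  qed
  finally show ?thesis .
qed

lemma norm_EE:
  fixes G :: "(nat \<Rightarrow> real) \<Rightarrow> (nat \<Rightarrow> real) \<Rightarrow> 'c::real_normed_field"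
  assumes "\<bar>a\<bar> \<le> 1" "\<bar>b\<bar> \<le> 1"
  shows "norm (EE n a b G) \<le> EE n a b (\<lambda>x y. norm (G x y))"
proof -
  have "norm (EE n a b G) \<le> (\<Sum>x\<in>spins n. \<Sum>y\<in>spins n. norm (of_real (Qv n a x * Qv n b y) * G x y))"
    unfolding EE_def by (rule order.trans[OF norm_sum sum_mono[OF norm_sum]])
  also have "\<dots> = EE n a b (\<lambda>x y. norm (G x y))"
    unfolding EE_def
  proof (intro sum.cong refl)
    fix x y assume "x \<in> spins n" "y \<in> spins n"
    hence "Qv n a x \<ge> 0" "Qv n b y \<ge> 0" using Qv_nonneg assms by auto
    thus "norm (of_real (Qv n a x * Qv n b y) * G x y) = of_real (Qv n a x * Qv n b y) * norm (G x y)"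
      by (simp add: norm_mult)
  qed
  finally show ?thesis .
qed

lemma EE_mono:
  fixes G K :: "(nat \<Rightarrow> real) \<Rightarrow> (nat \<Rightarrow> real) \<Rightarrow> real"
  assumes "\<bar>a\<bar> \<le> 1" "\<bar>b\<bar> \<le> 1" "\<And>x y. x \<in> spins n \<Longrightarrow> y \<in> spins n \<Longrightarrow> G x y \<le> K x y"
  shows "EE n a b G \<le> EE n a b K"
  unfolding EE_def using Qv_nonneg[OF assms(1)] Qv_nonneg[OF assms(2)] assms(3)
  by (intro sum_mono) (simp add: mult_left_mono)

definition sab :: "real \<Rightarrow> real \<Rightarrow> real" where "sab a b = sqrt ((1 - a^2) * (1 - b^2))"
definition wfn :: "real \<Rightarrow> real \<Rightarrow> real \<Rightarrow> real \<Rightarrow> real" where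
  "wfn a b u v = (u - a) * (v - b) / sab a b"

lemma e1_x: "e1 a b (\<lambda>u v. u - a) = (0::real)" "e1 a b (\<lambda>u v. (u - a) * (u - a)) = (1 - a^2 :: real)"
  "e1 a b (\<lambda>u v. v - b) = (0::real)" "e1 a b (\<lambda>u v. (v - b) * (v - b)) = (1 - b^2 :: real)"
  unfolding e1_real qb_def by (simp_all add: field_simps power2_eq_square)

lemma e1_w: assumes "\<bar>a\<bar> < 1" "\<bar>b\<bar> < 1"
  shows "e1 a b (wfn a b) = (0::real)" "e1 a b (\<lambda>u v. wfn a b u v * wfn a b u v) = (1::real)"
proof -
  have "a^2 < 1" "b^2 < 1" using assms abs_square_less_1 by blast+
  hence p: "(1 - a^2) * (1 - b^2) > 0" by simp
  hence s: "sab a b ^ 2 = (1 - a^2) * (1 - b^2)" "sab a b > 0" unfolding sab_def by auto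
  show "e1 a b (wfn a b) = (0::real)"
    unfolding e1_real qb_def wfn_def using s(2) by (simp add: field_simps)
  have "e1 a b (\<lambda>u v. wfn a b u v * wfn a b u v) = (1 - a^2) * (1 - b^2) / sab a b ^ 2"
    unfolding e1_real qb_def wfn_def using s(2) by (simp add: field_simps power2_eq_square)
  thus "e1 a b (\<lambda>u v. wfn a b u v * wfn a b u v) = (1::real)" using s p by (metis div_self less_irrefl)
qed

lemma EE_char:
  "EE n a b (\<lambda>x y. iexp (\<tau> * (\<Sum>i<n. wfn a b (x i) (y i)))) = (e1 a b (\<lambda>u v. iexp (\<tau> * wfn a b u v)))^n"
proof -
  have "iexp (\<tau> * (\<Sum>i<n. wfn a b (x i) (y i))) = (\<Prod>i<n. iexp (\<tau> * wfn a b (x i) (y i)))" for x y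
    by (simp add: sum_distrib_left exp_sum flip: exp_sum)
  hence "EE n a b (\<lambda>x y. iexp (\<tau> * (\<Sum>i<n. wfn a b (x i) (y i)))) = 
     EE n a b (\<lambda>x y. \<Prod>i<n. (\<lambda>u v. iexp (\<tau> * wfn a b u v)) (x i) (y i))" by simp
  also have "\<dots> = (e1 a b (\<lambda>u v. iexp (\<tau> * wfn a b u v)))^n"
    using EE_prod[of n a b "\<lambda>i u v. iexp (\<tau> * wfn a b u v)"] by simp
  finally show ?thesis .
qed

lemma e1_of_real: "e1 a b (\<lambda>u v. of_real (f u v)) = of_real (e1 a b f)"
  unfolding e1_def by simp

lemma e1_add: "e1 a b (\<lambda>u v. f u v + g u v) = e1 a b f + e1 a b g"
  unfolding e1_def by (simp add: distrib_left sum.distrib)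

lemma e1_diff: "e1 a b (\<lambda>u v. f u v - g u v) = e1 a b f - e1 a b g"
  unfolding e1_def by (simp add: right_diff_distrib sum_subtractf)

lemma e1_cmult: "e1 a b (\<lambda>u v. c * f u v) = c * e1 a b f"
  unfolding e1_def by (simp add: algebra_simps)

lemma e1_const: "e1 a b (\<lambda>u v. c) = c"
  using e1_cmult[of a b c "\<lambda>u v. 1"] by (simp add: e1_one)

lemma e1_mono:
  fixes f g :: "real \<Rightarrow> real \<Rightarrow> real"
  assumes "\<bar>a\<bar> \<le> 1" "\<bar>b\<bar> \<le> 1" "\<And>u v. u \<in> {-1,1} \<Longrightarrow> v \<in> {-1,1} \<Longrightarrow> f u v \<le> g u v"
  shows "e1 a b f \<le> e1 a b g"
  unfolding e1_def using qb_nonneg[OF assms(1)] qb_nonneg[OF assms(2)] assms(3)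
  by (intro sum_mono) (simp add: mult_left_mono)

lemma sab_ge: assumes "0 \<le> A" "A < 1" "\<bar>a\<bar> \<le> A" "\<bar>b\<bar> \<le> A"
  shows "sab a b \<ge> 1 - A^2"
proof -
  have "a^2 \<le> A^2" using power_mono[of "\<bar>a\<bar>" A 2] assms by simp
  moreover have "b^2 \<le> A^2" using power_mono[of "\<bar>b\<bar>" A 2] assms by simp
  moreover have "A^2 \<le> A" using assms by (simp add: power2_eq_square mult_left_le_one_le)
  hence "A^2 < 1" using assms by simp
  ultimately have "(1 - A^2) * (1 - A^2) \<le> (1 - a^2) * (1 - b^2)"
    by (intro mult_mono) auto
  hence "sqrt ((1 - A^2)^2) \<le> sab a b" unfolding sab_def power2_eq_square by (rule real_sqrt_le_mono)
  thus ?thesis using \<open>A^2 < 1\<close> by simp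
qed

lemma wf_bound: assumes "0 \<le> A" "A < 1" "\<bar>a\<bar> \<le> A" "\<bar>b\<bar> \<le> A" "u \<in> {-1,1}" "v \<in> {-1,1}"
  shows "\<bar>wfn a b u v\<bar> \<le> 4 / (1 - A^2)"
proof -
  have "A^2 \<le> A" using assms by (simp add: power2_eq_square mult_left_le_one_le)
  hence s: "sab a b \<ge> 1 - A^2" "1 - A^2 > 0" using sab_ge[OF assms(1-4)] assms by auto
  have "\<bar>u - a\<bar> \<le> 2" "\<bar>v - b\<bar> \<le> 2" using assms by auto
  hence "\<bar>u - a\<bar> * \<bar>v - b\<bar> \<le> 2 * 2" by (intro mult_mono) auto
  hence "\<bar>(u - a) * (v - b)\<bar> \<le> 4" by (simp add: abs_mult)
  hence "\<bar>(u - a) * (v - b)\<bar> / sab a b \<le> 4 / (1 - A^2)"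
    using s by (intro frac_le) auto
  thus ?thesis using s unfolding wfn_def by (simp add: abs_divide)
qed

lemma iexp_lip: "cmod (iexp x - iexp y) \<le> \<bar>x - y\<bar>"
proof -
  have "iexp x - iexp y = iexp y * (iexp (x - y) - 1)"
    by (simp add: algebra_simps flip: exp_add)
  hence "cmod (iexp x - iexp y) = cmod (iexp (x - y) - 1)"
    by (simp add: norm_mult)
  also have "\<dots> \<le> \<bar>x - y\<bar>" using iexp_approx1[of "x - y" 0] by simp
  finally show ?thesis .
qed

lemma cmod_iexp_diff_le2: "cmod (iexp x - iexp y) \<le> 2"
  using norm_triangle_ineq4[of "iexp x" "iexp y"] by simp




lemma taylor2: "(\<Sum>k\<le>2. (\<i> * complex_of_real x)^k / fact k) = 1 + \<i> * of_real x - of_real (x^2 / 2)"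
  by (simp add: eval_nat_numeral atMost_Suc power2_eq_square field_simps)

definition phi :: "real \<Rightarrow> real \<Rightarrow> real \<Rightarrow> complex" where
  "phi a b \<tau> = e1 a b (\<lambda>u v. iexp (\<tau> * wfn a b u v))"

lemma e1_T: assumes "\<bar>a\<bar> < 1" "\<bar>b\<bar> < 1"
  shows "e1 a b (\<lambda>u v. 1 + \<i> * of_real (\<tau> * wfn a b u v) - of_real ((\<tau> * wfn a b u v)^2 / 2)) = 1 - of_real (\<tau>^2 / 2)"
proof -
  have "e1 a b (\<lambda>u v. 1 + \<i> * of_real (\<tau> * wfn a b u v) - of_real ((\<tau> * wfn a b u v)^2 / 2))
     = e1 a b (\<lambda>u v. 1) + (\<i> * of_real \<tau>) * e1 a b (\<lambda>u v. of_real (wfn a b u v))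
       - of_real (\<tau>^2 / 2) * e1 a b (\<lambda>u v. of_real (wfn a b u v * wfn a b u v))"
    by (simp add: e1_add e1_diff flip: e1_cmult) (simp add: power2_eq_square mult_ac)
  also have "\<dots> = 1 - of_real (\<tau>^2 / 2)"
    using e1_w[OF assms] by (simp only: e1_of_real e1_one) simp
  finally show ?thesis .
qed

lemma phi_approx:
  assumes "0 \<le> A" "A < 1" "\<bar>a\<bar> \<le> A" "\<bar>b\<bar> \<le> A"
  shows "cmod (phi a b \<tau> - (1 - of_real (\<tau>^2 / 2))) \<le> \<bar>\<tau>\<bar>^3 * ((4 / (1 - A^2))^3 / 6)"
proof -
  have ab: "\<bar>a\<bar> < 1" "\<bar>b\<bar> < 1" "\<bar>a\<bar> \<le> 1" "\<bar>b\<bar> \<le> 1" using assms by auto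
  define T where "T u v = 1 + \<i> * of_real (\<tau> * wfn a b u v) - of_real ((\<tau> * wfn a b u v)^2 / 2)" for u v
  have "cmod (phi a b \<tau> - (1 - of_real (\<tau>^2 / 2))) = cmod (e1 a b (\<lambda>u v. iexp (\<tau> * wfn a b u v) - T u v))"
  proof -
    have "e1 a b T = 1 - of_real (\<tau>^2 / 2)" unfolding T_def by (rule e1_T[OF ab(1,2)])
    moreover have "e1 a b (\<lambda>u v. iexp (\<tau> * wfn a b u v) - T u v) = phi a b \<tau> - e1 a b T"
      unfolding phi_def by (rule e1_diff)
    ultimately show ?thesis by simp
  qed
  also have "\<dots> \<le> e1 a b (\<lambda>u v. cmod (iexp (\<tau> * wfn a b u v) - T u v))"
    by (rule norm_e1[OF ab(3,4)])
  also have "\<dots> \<le> e1 a b (\<lambda>u v. \<bar>\<tau>\<bar>^3 * ((4 / (1 - A^2))^3 / 6))"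
  proof (rule e1_mono[OF ab(3,4)])
    fix u v :: real assume uv: "u \<in> {-1,1}" "v \<in> {-1,1}"
    have "cmod (iexp (\<tau> * wfn a b u v) - T u v) \<le> \<bar>\<tau> * wfn a b u v\<bar>^3 / 6"
      using iexp_approx1[of "\<tau> * wfn a b u v" 2] unfolding taylor2 T_def by (simp add: fact_numeral)
    also have "\<dots> = \<bar>\<tau>\<bar>^3 * \<bar>wfn a b u v\<bar>^3 / 6" by (simp add: abs_mult power_mult_distrib)
    also have "\<dots> \<le> \<bar>\<tau>\<bar>^3 * (4 / (1 - A^2))^3 / 6"
      using wf_bound[OF assms uv] by (intro divide_right_mono mult_left_mono power_mono) auto
    finally show "cmod (iexp (\<tau> * wfn a b u v) - T u v) \<le> \<bar>\<tau>\<bar>^3 * ((4 / (1 - A^2))^3 / 6)" by simp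
  qed
  also have "\<dots> = \<bar>\<tau>\<bar>^3 * ((4 / (1 - A^2))^3 / 6)" by (rule e1_const)
  finally show ?thesis .
qed

lemma phi_norm: "\<bar>a\<bar> \<le> 1 \<Longrightarrow> \<bar>b\<bar> \<le> 1 \<Longrightarrow> cmod (phi a b \<tau>) \<le> 1"
  unfolding phi_def using norm_e1[of a b "\<lambda>u v. iexp (\<tau> * wfn a b u v)"] by (simp add: e1_one)

lemma sq_diff_bound:
  fixes a b dx dy :: real
  assumes "\<bar>a\<bar> \<le> 1" "\<bar>b\<bar> \<le> 1" "\<bar>a + dx\<bar> \<le> 1" "\<bar>b + dy\<bar> \<le> 1"
  shows "\<bar>(1 - a^2) * (1 - b^2) - (1 - (a+dx)^2) * (1 - (b+dy)^2)\<bar> \<le> 2 * \<bar>dx\<bar> + 2 * \<bar>dy\<bar>"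
proof -
  have e: "(1 - a^2) * (1 - b^2) - (1 - (a+dx)^2) * (1 - (b+dy)^2)
     = (1 - a^2) * (dy * (2*b + dy)) + (1 - (b+dy)^2) * (dx * (2*a + dx))"
    by (simp add: algebra_simps power2_eq_square)
  have h1: "0 \<le> 1 - a^2" "1 - a^2 \<le> 1" "0 \<le> 1 - (b+dy)^2" "1 - (b+dy)^2 \<le> 1"
  proof -
    have "a^2 \<le> 1" "(b+dy)^2 \<le> 1" using assms abs_square_le_1 by blast+
    thus "0 \<le> 1 - a^2" "1 - a^2 \<le> 1" "0 \<le> 1 - (b+dy)^2" "1 - (b+dy)^2 \<le> 1" by auto
  qed
  have h2: "\<bar>dy * (2*b + dy)\<bar> \<le> 2 * \<bar>dy\<bar>"
  proof -
    have "\<bar>2*b + dy\<bar> \<le> 2" using assms by (simp add: abs_le_iff) 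
    thus ?thesis by (simp add: abs_mult mult.commute mult_left_mono)
  qed
  have h3: "\<bar>dx * (2*a + dx)\<bar> \<le> 2 * \<bar>dx\<bar>"
  proof -
    have "\<bar>2*a + dx\<bar> \<le> 2" using assms by (simp add: abs_le_iff) 
    thus ?thesis by (simp add: abs_mult mult.commute mult_left_mono)
  qed
  have "\<bar>(1 - a^2) * (dy * (2*b + dy))\<bar> \<le> 2 * \<bar>dy\<bar>"
  proof -
    have "\<bar>1 - a^2\<bar> * \<bar>dy * (2*b + dy)\<bar> \<le> 1 * (2 * \<bar>dy\<bar>)"
      using h1 h2 by (intro mult_mono) auto
    thus ?thesis by (simp add: abs_mult)
  qed
  moreover have "\<bar>(1 - (b+dy)^2) * (dx * (2*a + dx))\<bar> \<le> 2 * \<bar>dx\<bar>"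
  proof -
    have "\<bar>1 - (b+dy)^2\<bar> * \<bar>dx * (2*a + dx)\<bar> \<le> 1 * (2 * \<bar>dx\<bar>)"
      using h1 h3 by (intro mult_mono) auto
    thus ?thesis by (simp add: abs_mult)
  qed
  ultimately show ?thesis unfolding e by linarith
qed

lemma sqrt_diff_bound:
  fixes P Q s0 :: real
  assumes "0 < s0" "s0 \<le> sqrt P" "0 \<le> Q"
  shows "\<bar>sqrt P - sqrt Q\<bar> \<le> \<bar>P - Q\<bar> / s0"
proof -
  have P: "0 \<le> P" using assms by (metis less_le_trans order.strict_implies_order real_sqrt_lt_0_iff not_less)
  have "(sqrt P - sqrt Q) * (sqrt P + sqrt Q) = P - Q"
    using P assms(3) by (simp add: algebra_simps flip: power2_eq_square)
  hence "\<bar>sqrt P - sqrt Q\<bar> * \<bar>sqrt P + sqrt Q\<bar> = \<bar>P - Q\<bar>" by (metis abs_mult)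
  hence "\<bar>sqrt P - sqrt Q\<bar> * (sqrt P + sqrt Q) = \<bar>P - Q\<bar>" using P assms(3) by simp
  moreover have "sqrt P + sqrt Q \<ge> s0" using assms real_sqrt_ge_zero[of Q] by linarith
  ultimately have "\<bar>sqrt P - sqrt Q\<bar> * s0 \<le> \<bar>P - Q\<bar>"
    by (metis abs_ge_zero mult_left_mono)
  thus ?thesis using assms(1) by (simp add: field_simps)
qed

lemma amgm: fixes g d r :: real assumes "r > 0"
  shows "\<bar>g\<bar> * \<bar>d\<bar> \<le> (g^2 / r + r * d^2) / 2"
proof -
  have "0 \<le> (\<bar>g\<bar> - r * \<bar>d\<bar>)^2" by simp
  hence "2 * r * (\<bar>g\<bar> * \<bar>d\<bar>) \<le> g^2 + r^2 * d^2"
    by (simp add: power2_eq_square algebra_simps)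
  thus ?thesis using assms by (simp add: field_simps power2_eq_square)
qed

definition etaA :: "real \<Rightarrow> real" where "etaA A = (1 - A) / 2"
definition kapA :: "real \<Rightarrow> real" where "kapA A = 1 - ((1 + A) / 2)^2"
definition K1A :: "real \<Rightarrow> real" where "K1A A = 2 / ((1 - A^2) * kapA A) + 1 / kapA A"

lemma consts_pos: assumes "0 \<le> A" "A < 1"
  shows "etaA A > 0" "kapA A > 0" "1 - A^2 > 0" "K1A A > 0"
proof -
  show "etaA A > 0" using assms unfolding etaA_def by simp
  have "(1 + A) / 2 < 1" "0 \<le> (1 + A) / 2" using assms by auto
  hence "((1 + A) / 2)^2 < 1" by (simp add: power_less_one_iff)
  thus k: "kapA A > 0" unfolding kapA_def by simp
  have "A^2 \<le> A" using assms by (simp add: power2_eq_square mult_left_le_one_le)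
  thus s: "1 - A^2 > 0" using assms by simp
  show "K1A A > 0" unfolding K1A_def using k s by (simp add: add_pos_pos)
qed

lemma pw_bound:
  fixes A a b g dx dy r t :: real
  assumes A: "0 \<le> A" "A < 1" "\<bar>a\<bar> \<le> A" "\<bar>b\<bar> \<le> A"
    and xb: "\<bar>a + dx\<bar> \<le> 1" "\<bar>b + dy\<bar> \<le> 1" and r: "r > 0"
  shows "cmod (iexp (t * ((sab a b * g - r * dx * dy) / (sqrt (1 - (a+dx)^2) * sqrt (1 - (b+dy)^2))))
            - iexp (t * g))
         \<le> 2 * (dx^2 + dy^2) / etaA A ^ 2 + \<bar>t\<bar> * K1A A * (g^2 / r + r * (dx^2 + dy^2))"
proof -
  define F where "F = (sab a b * g - r * dx * dy) / (sqrt (1 - (a+dx)^2) * sqrt (1 - (b+dy)^2))"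
  define \<eta> where "\<eta> = etaA A"
  define \<kappa> where "\<kappa> = kapA A"
  define s0 where "s0 = 1 - A^2"
  have pos: "\<eta> > 0" "\<kappa> > 0" "s0 > 0" "K1A A > 0" using consts_pos[OF A(1,2)] unfolding \<eta>_def \<kappa>_def s0_def by auto
  have R2: "0 \<le> \<bar>t\<bar> * K1A A * (g^2 / r + r * (dx^2 + dy^2))"
    using pos r by (intro mult_nonneg_nonneg add_nonneg_nonneg) auto
  show ?thesis
  proof (cases "\<bar>dx\<bar> \<le> \<eta> \<and> \<bar>dy\<bar> \<le> \<eta>")
    case False
    hence "\<eta>^2 \<le> dx^2 + dy^2"
      using pos(1) by (auto simp: abs_le_square_iff[symmetric] intro: add_increasing add_increasing2 less_imp_le
        dest!: power_strict_mono[of \<eta> "\<bar>_\<bar>" 2, rotated])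
    hence "2 \<le> 2 * (dx^2 + dy^2) / \<eta>^2" using pos by (simp add: field_simps)
    thus ?thesis using cmod_iexp_diff_le2[of "t * F" "t * g"] R2 unfolding F_def \<eta>_def by linarith
  next
    case True
    have s: "sab a b \<ge> s0" unfolding s0_def by (rule sab_ge[OF A])
    have xk: "1 - (a+dx)^2 \<ge> \<kappa>" "1 - (b+dy)^2 \<ge> \<kappa>"
    proof -
      have "\<bar>a + dx\<bar> \<le> (1 + A) / 2" "\<bar>b + dy\<bar> \<le> (1 + A) / 2"
        using True A abs_triangle_ineq[of a dx] abs_triangle_ineq[of b dy] unfolding \<eta>_def etaA_def by auto
      hence "(a+dx)^2 \<le> ((1 + A) / 2)^2" "(b+dy)^2 \<le> ((1 + A) / 2)^2"
        using A by (auto simp: abs_le_square_iff[symmetric])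
      thus "1 - (a+dx)^2 \<ge> \<kappa>" "1 - (b+dy)^2 \<ge> \<kappa>" unfolding \<kappa>_def kapA_def by auto
    qed
    define Q where "Q = sqrt (1 - (a+dx)^2) * sqrt (1 - (b+dy)^2)"
    have Qeq: "Q = sqrt ((1 - (a+dx)^2) * (1 - (b+dy)^2))" unfolding Q_def by (simp add: real_sqrt_mult)
    have Qk: "Q \<ge> \<kappa>"
    proof -
      have "\<kappa> * \<kappa> \<le> (1 - (a+dx)^2) * (1 - (b+dy)^2)" using xk pos by (intro mult_mono) auto
      hence "sqrt (\<kappa> * \<kappa>) \<le> Q" unfolding Qeq by (rule real_sqrt_le_mono)
      thus ?thesis using pos by simp
    qed
    have sQ: "\<bar>sab a b - Q\<bar> \<le> (2 * \<bar>dx\<bar> + 2 * \<bar>dy\<bar>) / s0"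
    proof -
      have "\<bar>sab a b - Q\<bar> \<le> \<bar>(1 - a^2) * (1 - b^2) - (1 - (a+dx)^2) * (1 - (b+dy)^2)\<bar> / s0"
        unfolding sab_def Qeq using pos s xk by (intro sqrt_diff_bound) (auto simp: sab_def)
      also have "\<dots> \<le> (2 * \<bar>dx\<bar> + 2 * \<bar>dy\<bar>) / s0"
        using sq_diff_bound[of a b dx dy] A xb pos by (intro divide_right_mono) auto
      finally show ?thesis .
    qed
    have "F - g = (g * (sab a b - Q) - r * dx * dy) / Q"
      unfolding F_def Q_def[symmetric] using Qk pos by (simp add: field_simps)
    hence "\<bar>F - g\<bar> \<le> (\<bar>g\<bar> * \<bar>sab a b - Q\<bar> + r * \<bar>dx\<bar> * \<bar>dy\<bar>) / \<kappa>"
    proof -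
      assume e: "F - g = (g * (sab a b - Q) - r * dx * dy) / Q"
      have "\<bar>g * (sab a b - Q) - r * dx * dy\<bar> \<le> \<bar>g\<bar> * \<bar>sab a b - Q\<bar> + r * \<bar>dx\<bar> * \<bar>dy\<bar>"
        using r by (simp add: abs_mult abs_triangle_ineq4 order_trans[OF abs_triangle_ineq4])
      thus ?thesis unfolding e using Qk pos by (simp add: abs_divide frac_le)
    qed
    also have "\<dots> \<le> (\<bar>g\<bar> * ((2 * \<bar>dx\<bar> + 2 * \<bar>dy\<bar>) / s0) + r * ((dx^2 + dy^2) / 2)) / \<kappa>"
    proof -
      have "\<bar>dx\<bar> * \<bar>dy\<bar> \<le> (dx^2 + dy^2) / 2"
        using amgm[of 1 dx dy] by (simp add: mult.commute)
      hence "r * \<bar>dx\<bar> * \<bar>dy\<bar> \<le> r * ((dx^2 + dy^2) / 2)" using r by (simp add: mult.assoc)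
      thus ?thesis using sQ pos by (intro divide_right_mono add_mono mult_left_mono) auto
    qed
    also have "\<dots> = (2 * (\<bar>g\<bar> * \<bar>dx\<bar> + \<bar>g\<bar> * \<bar>dy\<bar>) / s0 + r * ((dx^2 + dy^2) / 2)) / \<kappa>"
      by (simp add: algebra_simps)
    also have "\<dots> \<le> (2 * ((g^2 / r + r * dx^2) / 2 + (g^2 / r + r * dy^2) / 2) / s0 + r * ((dx^2 + dy^2) / 2)) / \<kappa>"
      using amgm[OF r, of g dx] amgm[OF r, of g dy] pos r by (intro divide_right_mono add_mono mult_left_mono) auto
    also have "\<dots> = (2 / (s0 * \<kappa>)) * (g^2 / r) + (1 / (s0 * \<kappa>) + 1 / (2 * \<kappa>)) * (r * (dx^2 + dy^2))"
      using pos by (simp add: field_simps)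
    also have "\<dots> \<le> K1A A * (g^2 / r) + K1A A * (r * (dx^2 + dy^2))"
    proof (intro add_mono mult_right_mono)
      show "2 / (s0 * \<kappa>) \<le> K1A A" unfolding K1A_def s0_def[symmetric] \<kappa>_def[symmetric] using pos by simp
      have "1 / (s0 * \<kappa>) \<le> 2 / (s0 * \<kappa>)" using pos by (simp add: divide_right_mono)
      moreover have "1 / (2 * \<kappa>) \<le> 1 / \<kappa>" using pos by (simp add: field_simps)
      ultimately show "1 / (s0 * \<kappa>) + 1 / (2 * \<kappa>) \<le> K1A A"
        unfolding K1A_def s0_def[symmetric] \<kappa>_def[symmetric] by linarith
    qed (use r in auto)
    finally have FG: "\<bar>F - g\<bar> \<le> K1A A * (g^2 / r + r * (dx^2 + dy^2))" by (simp add: algebra_simps)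
    have "cmod (iexp (t * F) - iexp (t * g)) \<le> \<bar>t * F - t * g\<bar>" by (rule iexp_lip)
    also have "\<dots> = \<bar>t\<bar> * \<bar>F - g\<bar>" by (simp add: abs_mult flip: right_diff_distrib)
    also have "\<dots> \<le> \<bar>t\<bar> * (K1A A * (g^2 / r + r * (dx^2 + dy^2)))" using FG by (simp add: mult_left_mono)
    finally show ?thesis unfolding F_def using pos
      by (smt (verit) divide_nonneg_nonneg mult.assoc zero_le_power2 add_nonneg_nonneg)
  qed
qed

definition Dn :: "nat \<Rightarrow> real \<Rightarrow> (nat \<Rightarrow> real) \<Rightarrow> real" where
  "Dn n a x = (\<Sum>i<n. x i - a) / n"
definition Gn :: "nat \<Rightarrow> real \<Rightarrow> real \<Rightarrow> (nat \<Rightarrow> real) \<Rightarrow> (nat \<Rightarrow> real) \<Rightarrow> real" where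
  "Gn n a b x y = (\<Sum>i<n. wfn a b (x i) (y i)) / sqrt n"

lemma Dn_mean: "n > 0 \<Longrightarrow> a + Dn n a x = sample_mean n x"
  unfolding Dn_def sample_mean_def by (simp add: sum_subtractf field_simps)

lemma spins_sq: "x \<in> spins n \<Longrightarrow> i < n \<Longrightarrow> (x i)^2 = 1"
  using spins_val[of x n i] by auto

lemma sum_sq_centered:
  assumes "x \<in> spins n" "n > 0"
  shows "(\<Sum>i<n. (x i - sample_mean n x)^2) = n * (1 - (sample_mean n x)^2)"
proof -
  define m where "m = sample_mean n x"
  have S: "(\<Sum>i<n. x i) = n * m" unfolding m_def sample_mean_def using assms by simp
  have "(\<Sum>i<n. (x i - m)^2) = (\<Sum>i<n. (x i)^2) - 2 * m * (\<Sum>i<n. x i) + n * m^2"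
    by (simp add: power2_diff sum_subtractf sum.distrib sum_distrib_left mult_ac)
  also have "(\<Sum>i<n. (x i)^2) = n" using spins_sq[OF assms(1)] by simp
  finally show ?thesis unfolding S m_def[symmetric] by (simp add: algebra_simps power2_eq_square)
qed

lemma sum_cross_centered:
  assumes "n > 0"
  shows "(\<Sum>i<n. (x i - sample_mean n x) * (y i - sample_mean n y)) =
     (\<Sum>i<n. (x i - a) * (y i - b)) - n * (sample_mean n x - a) * (sample_mean n y - b)"
proof -
  define m1 where "m1 = sample_mean n x"
  define m2 where "m2 = sample_mean n y"
  have S1: "(\<Sum>i<n. x i) = n * m1" unfolding m1_def sample_mean_def using assms by simp
  have S2: "(\<Sum>i<n. y i) = n * m2" unfolding m2_def sample_mean_def using assms by simp
  have "(\<Sum>i<n. (x i - m1) * (y i - m2)) = (\<Sum>i<n. x i * y i) - m2 * (\<Sum>i<n. x i) - m1 * (\<Sum>i<n. y i) + n * m1 * m2"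
    by (simp add: algebra_simps sum_subtractf sum.distrib sum_distrib_left)
  moreover have "(\<Sum>i<n. (x i - a) * (y i - b)) = (\<Sum>i<n. x i * y i) - b * (\<Sum>i<n. x i) - a * (\<Sum>i<n. y i) + n * a * b"
    by (simp add: algebra_simps sum_subtractf sum.distrib sum_distrib_left)
  ultimately show ?thesis unfolding S1 S2 m1_def[symmetric] m2_def[symmetric] by (simp add: algebra_simps)
qed

lemma F_identity:
  assumes "x \<in> spins n" "y \<in> spins n" "n > 0" "\<bar>a\<bar> < 1" "\<bar>b\<bar> < 1"
  shows "sqrt n * sample_corr n x y = (sab a b * Gn n a b x y - sqrt n * Dn n a x * Dn n b y) /
     (sqrt (1 - (a + Dn n a x)^2) * sqrt (1 - (b + Dn n b y)^2))"
proof -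
  define m1 where "m1 = sample_mean n x"
  define m2 where "m2 = sample_mean n y"
  have sp: "sab a b > 0"
  proof -
    have "a^2 < 1" "b^2 < 1" using assms abs_square_less_1 by blast+
    thus ?thesis unfolding sab_def by simp
  qed
  have D1: "Dn n a x = m1 - a" and D2: "Dn n b y = m2 - b"
    using Dn_mean[OF assms(3)] unfolding m1_def m2_def by (metis add_diff_cancel_left')+
  have W: "(\<Sum>i<n. (x i - a) * (y i - b)) = sab a b * sqrt n * Gn n a b x y"
    unfolding Gn_def wfn_def using sp assms(3) by (simp add: sum_divide_distrib[symmetric])
  have den: "sqrt (\<Sum>i<n. (x i - m1)^2) * sqrt (\<Sum>i<n. (y i - m2)^2)
       = n * (sqrt (1 - m1^2) * sqrt (1 - m2^2))"
    unfolding m1_def m2_def sum_sq_centered[OF assms(1,3)] sum_sq_centered[OF assms(2,3)]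
    by (simp add: real_sqrt_mult)
  have "sqrt n * sample_corr n x y = sqrt n * ((sab a b * sqrt n * Gn n a b x y - n * (m1 - a) * (m2 - b))
        / (n * (sqrt (1 - m1^2) * sqrt (1 - m2^2))))"
  proof -
    have C: "(\<Sum>i<n. (x i - m1) * (y i - m2)) = sab a b * sqrt n * Gn n a b x y - n * (m1 - a) * (m2 - b)"
      using sum_cross_centered[OF assms(3), of x y a b] W unfolding m1_def m2_def by simp
    show ?thesis unfolding sample_corr_def m1_def[symmetric] m2_def[symmetric] den C by simp
  qed
  also have "\<dots> = (sab a b * Gn n a b x y - sqrt n * (m1 - a) * (m2 - b)) / (sqrt (1 - m1^2) * sqrt (1 - m2^2))"
  proof -
    define Q where "Q = sqrt (1 - m1^2) * sqrt (1 - m2^2)"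
    define Y where "Y = sab a b * Gn n a b x y - sqrt n * (m1 - a) * (m2 - b)"
    define r where "r = sqrt n"
    have nn: "real n = r * r" "r > 0" unfolding r_def using assms(3) by simp_all
    have "sab a b * sqrt n * Gn n a b x y - n * (m1 - a) * (m2 - b) = sqrt n * Y"
      unfolding Y_def r_def[symmetric] nn(1) by (simp add: algebra_simps)
    moreover have "sqrt n * ((sqrt n * Y) / (n * Q)) = Y / Q"
      unfolding r_def[symmetric] nn(1) using nn(2) by (cases "Q = 0") (simp_all add: field_simps)
    ultimately show ?thesis unfolding Q_def Y_def by simp
  qed
  finally show ?thesis unfolding D1 D2 by simp
qed

lemma EE_Dx2: assumes "n > 0"
  shows "EE n a b (\<lambda>x y. (Dn n a x)^2) = (1 - a^2) / n"
proof -
  have "EE n a b (\<lambda>x y. (Dn n a x)^2) = EE n a b (\<lambda>x y. (1 / n^2) * (\<Sum>i<n. (\<lambda>u v. u - a) (x i) (y i))^2)"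
    unfolding Dn_def by (simp add: power_divide)
  also have "\<dots> = (1 / n^2) * (n * (1 - a^2))"
    unfolding EE_cmult by (subst EE_sq_sum) (simp_all add: e1_x)
  finally show ?thesis using assms by (simp add: power2_eq_square)
qed

lemma EE_Dy2: assumes "n > 0"
  shows "EE n a b (\<lambda>x y. (Dn n b y)^2) = (1 - b^2) / n"
proof -
  have "EE n a b (\<lambda>x y. (Dn n b y)^2) = EE n a b (\<lambda>x y. (1 / n^2) * (\<Sum>i<n. (\<lambda>u v. v - b) (x i) (y i))^2)"
    unfolding Dn_def by (simp add: power_divide)
  also have "\<dots> = (1 / n^2) * (n * (1 - b^2))"
    unfolding EE_cmult by (subst EE_sq_sum) (simp_all add: e1_x)
  finally show ?thesis using assms by (simp add: power2_eq_square)
qed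

lemma EE_G2: assumes "n > 0" "\<bar>a\<bar> < 1" "\<bar>b\<bar> < 1"
  shows "EE n a b (\<lambda>x y. (Gn n a b x y)^2) = 1"
proof -
  have "EE n a b (\<lambda>x y. (Gn n a b x y)^2) = EE n a b (\<lambda>x y. (1 / n) * (\<Sum>i<n. wfn a b (x i) (y i))^2)"
    unfolding Gn_def using assms by (simp add: power_divide)
  also have "\<dots> = (1 / n) * (n * 1)"
    unfolding EE_cmult by (subst EE_sq_sum) (simp_all add: e1_w[OF assms(2,3)])
  finally show ?thesis using assms by simp
qed

lemma mean_abs_le1: assumes "x \<in> spins n" shows "\<bar>sample_mean n x\<bar> \<le> 1"
proof (cases "n = 0")
  case False
  have "\<bar>\<Sum>i<n. x i\<bar> \<le> (\<Sum>i<n. \<bar>x i\<bar>)" by (rule sum_abs)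
  also have "\<dots> = (\<Sum>i<n. 1)" by (intro sum.cong refl) (use spins_val[OF assms] in fastforce)
  also have "\<dots> = n" by simp
  finally show ?thesis using False unfolding sample_mean_def by (simp add: abs_divide)
qed (simp add: sample_mean_def)




definition C0A :: "real \<Rightarrow> real" where "C0A A = (4 / (1 - A^2))^3 / 6"

lemma char_G:
  assumes A: "0 \<le> A" "A < 1" "\<bar>a\<bar> \<le> A" "\<bar>b\<bar> \<le> A" and n: "n > 0" and t: "t^2 \<le> 4 * n"
  shows "cmod (EE n a b (\<lambda>x y. iexp (t * Gn n a b x y)) - of_real ((1 - t^2 / (2 * n))^n))
    \<le> \<bar>t\<bar>^3 * C0A A / sqrt n"
proof -
  define \<tau> where "\<tau> = t / sqrt n"
  have sn: "sqrt n > 0" using n by simp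
  have "EE n a b (\<lambda>x y. iexp (t * Gn n a b x y)) = EE n a b (\<lambda>x y. iexp (\<tau> * (\<Sum>i<n. wfn a b (x i) (y i))))"
    unfolding Gn_def \<tau>_def by simp
  also have "\<dots> = phi a b \<tau> ^ n" unfolding EE_char phi_def ..
  finally have E: "EE n a b (\<lambda>x y. iexp (t * Gn n a b x y)) = phi a b \<tau> ^ n" .
  have tau2: "\<tau>^2 = t^2 / n" unfolding \<tau>_def using n by (simp add: power_divide)
  have c1: "cmod (1 - of_real (\<tau>^2 / 2)) \<le> 1"
  proof -
    have "\<tau>^2 / 2 \<le> 2" using t n unfolding tau2 by (simp add: field_simps)
    moreover have "0 \<le> \<tau>^2 / 2" by simp
    ultimately have "\<bar>1 - \<tau>^2 / 2\<bar> \<le> 1" by (simp only: abs_le_iff) linarith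
    thus ?thesis by (metis norm_of_real of_real_1 of_real_diff)
  qed
  have ab: "\<bar>a\<bar> \<le> 1" "\<bar>b\<bar> \<le> 1" using A by auto
  have "cmod (phi a b \<tau> ^ n - (1 - of_real (\<tau>^2 / 2))^n) \<le> n * cmod (phi a b \<tau> - (1 - of_real (\<tau>^2 / 2)))"
    by (rule norm_power_diff[OF phi_norm[OF ab] c1])
  also have "\<dots> \<le> n * (\<bar>\<tau>\<bar>^3 * C0A A)"
    using phi_approx[OF A, of \<tau>] unfolding C0A_def by (intro mult_left_mono) auto
  also have "\<dots> = \<bar>t\<bar>^3 * C0A A / sqrt n"
  proof -
    have "\<bar>\<tau>\<bar>^3 = \<bar>t\<bar>^3 / (sqrt n * sqrt n * sqrt n)" unfolding \<tau>_def using sn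
      by (simp add: abs_divide power_divide eval_nat_numeral)
    thus ?thesis using sn n by (simp add: field_simps)
  qed
  finally show ?thesis unfolding E tau2 by (simp add: field_simps)
qed

definition Bnd :: "real \<Rightarrow> nat \<Rightarrow> real \<Rightarrow> real" where
  "Bnd A n t = 4 / (n * etaA A ^ 2) + 3 * \<bar>t\<bar> * K1A A / sqrt n + \<bar>t\<bar>^3 * C0A A / sqrt n
      + abs ((1 - t^2 / (2 * n))^n - exp (- (t^2) / 2))"

lemma FG_bound:
  assumes A: "0 \<le> A" "A < 1" "\<bar>a\<bar> \<le> A" "\<bar>b\<bar> \<le> A" and n: "n > 0"
  shows "cmod (EE n a b (\<lambda>x y. iexp (t * (sqrt n * sample_corr n x y))) - EE n a b (\<lambda>x y. iexp (t * Gn n a b x y)))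
    \<le> 4 / (n * etaA A ^ 2) + 3 * \<bar>t\<bar> * K1A A / sqrt n"
proof -
  define r where "r = sqrt n"
  have r: "r > 0" "r * r = n" unfolding r_def using n by auto
  have ab: "\<bar>a\<bar> \<le> 1" "\<bar>b\<bar> \<le> 1" "\<bar>a\<bar> < 1" "\<bar>b\<bar> < 1" using A by auto
  have pos: "etaA A > 0" "K1A A > 0" using consts_pos[OF A(1,2)] by auto
  define c1 where "c1 = 2 / etaA A ^ 2"
  define c2 where "c2 = \<bar>t\<bar> * K1A A / r"
  define c3 where "c3 = \<bar>t\<bar> * K1A A * r"
  have "cmod (EE n a b (\<lambda>x y. iexp (t * (sqrt n * sample_corr n x y))) - EE n a b (\<lambda>x y. iexp (t * Gn n a b x y)))
     = cmod (EE n a b (\<lambda>x y. iexp (t * (sqrt n * sample_corr n x y)) - iexp (t * Gn n a b x y)))"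
    by (simp add: EE_diff)
  also have "\<dots> \<le> EE n a b (\<lambda>x y. cmod (iexp (t * (sqrt n * sample_corr n x y)) - iexp (t * Gn n a b x y)))"
    by (rule norm_EE[OF ab(1,2)])
  also have "\<dots> \<le> EE n a b (\<lambda>x y. c1 * (Dn n a x)^2 + c1 * (Dn n b y)^2 + c2 * (Gn n a b x y)^2
                    + c3 * (Dn n a x)^2 + c3 * (Dn n b y)^2)"
  proof (rule EE_mono[OF ab(1,2)])
    fix x y assume xy: "x \<in> spins n" "y \<in> spins n"
    have m: "\<bar>a + Dn n a x\<bar> \<le> 1" "\<bar>b + Dn n b y\<bar> \<le> 1"
      using Dn_mean[OF n] mean_abs_le1 xy by metis+
    have "cmod (iexp (t * (sqrt n * sample_corr n x y)) - iexp (t * Gn n a b x y))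
       \<le> 2 * ((Dn n a x)^2 + (Dn n b y)^2) / etaA A ^ 2 + \<bar>t\<bar> * K1A A * ((Gn n a b x y)^2 / r + r * ((Dn n a x)^2 + (Dn n b y)^2))"
      unfolding F_identity[OF xy n ab(3,4)] r_def by (rule pw_bound[OF A m]) (use n in simp)
    also have "\<dots> = c1 * (Dn n a x)^2 + c1 * (Dn n b y)^2 + c2 * (Gn n a b x y)^2
                    + c3 * (Dn n a x)^2 + c3 * (Dn n b y)^2"
    proof -
      have "2 * ((Dn n a x)^2 + (Dn n b y)^2) / etaA A ^ 2 = c1 * (Dn n a x)^2 + c1 * (Dn n b y)^2"
        unfolding c1_def by (simp add: add_divide_distrib)
      moreover have "\<bar>t\<bar> * K1A A * ((Gn n a b x y)^2 / r + r * ((Dn n a x)^2 + (Dn n b y)^2))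
          = c2 * (Gn n a b x y)^2 + c3 * (Dn n a x)^2 + c3 * (Dn n b y)^2"
        unfolding c2_def c3_def by (simp add: algebra_simps)
      ultimately show ?thesis by linarith
    qed
    finally show "cmod (iexp (t * (sqrt n * sample_corr n x y)) - iexp (t * Gn n a b x y))
       \<le> c1 * (Dn n a x)^2 + c1 * (Dn n b y)^2 + c2 * (Gn n a b x y)^2
                    + c3 * (Dn n a x)^2 + c3 * (Dn n b y)^2" .
  qed
  also have "\<dots> = c1 * ((1 - a^2) / n) + c1 * ((1 - b^2) / n) + c2 * 1 + c3 * ((1 - a^2) / n) + c3 * ((1 - b^2) / n)"
    by (simp only: EE_add EE_cmult EE_Dx2[OF n] EE_Dy2[OF n] EE_G2[OF n ab(3,4)])
  also have "\<dots> \<le> c1 * (1 / n) + c1 * (1 / n) + c2 * 1 + c3 * (1 / n) + c3 * (1 / n)"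
    unfolding c1_def c2_def c3_def using pos r n
    by (intro add_mono mult_left_mono divide_right_mono) (auto intro!: mult_nonneg_nonneg)
  also have "\<dots> = 4 / (n * etaA A ^ 2) + 3 * \<bar>t\<bar> * K1A A / sqrt n"
    unfolding c1_def c2_def c3_def r_def[symmetric] using r by (simp add: field_simps flip: r(2))
  finally show ?thesis .
qed

lemma D_bound:
  assumes A: "0 \<le> A" "A < 1" "\<bar>a\<bar> \<le> A" "\<bar>b\<bar> \<le> A" and n: "n > 0" and t: "t^2 \<le> 4 * n"
  shows "cmod (EE n a b (\<lambda>x y. iexp (t * (sqrt n * sample_corr n x y))) - of_real (exp (- (t^2) / 2))) \<le> Bnd A n t"
proof -
  have "cmod (of_real ((1 - t^2 / (2 * n))^n) - of_real (exp (- (t^2) / 2)) :: complex)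
      = abs ((1 - t^2 / (2 * n))^n - exp (- (t^2) / 2))"
    by (metis norm_of_real of_real_diff)
  thus ?thesis using FG_bound[OF A n, of t] char_G[OF A n t] unfolding Bnd_def
    using norm_triangle_ineq[of "EE n a b (\<lambda>x y. iexp (t * (sqrt n * sample_corr n x y))) - EE n a b (\<lambda>x y. iexp (t * Gn n a b x y))"
       "EE n a b (\<lambda>x y. iexp (t * Gn n a b x y)) - of_real ((1 - t^2 / (2 * n))^n)"]
      norm_triangle_ineq[of "EE n a b (\<lambda>x y. iexp (t * (sqrt n * sample_corr n x y))) - of_real ((1 - t^2 / (2 * n))^n)"
       "of_real ((1 - t^2 / (2 * n))^n) - of_real (exp (- (t^2) / 2))"]
    by (simp add: algebra_simps)
qed




definition Mh :: "nat \<Rightarrow> real \<Rightarrow> ((nat \<Rightarrow> real) \<Rightarrow> real) \<Rightarrow> real" where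
  "Mh n h G = (\<Sum>z\<in>spins n. Qv n (tanh h) z * G z)"

lemma Qv_sum: "(\<Sum>z\<in>spins n. Qv n a z) = 1"
proof -
  have "(\<Sum>z\<in>spins n. Qv n a z) = (\<Prod>i<n. \<Sum>u\<in>{-1,1}. qb a u)"
    unfolding Qv_def spins_def by (rule prod_sum_PiE[symmetric]) auto
  also have "\<dots> = 1" unfolding qb_def by (simp add: add_divide_distrib[symmetric])
  finally show ?thesis .
qed

lemma tanh_le1: "\<bar>tanh (h::real)\<bar> \<le> 1"
  using tanh_real_bounds[of h] by auto

lemma Mh_one: "Mh n h (\<lambda>z. 1) = 1"
  unfolding Mh_def using Qv_sum by simp

lemma Mh_bound: assumes "\<And>z. z \<in> spins n \<Longrightarrow> \<bar>G z\<bar> \<le> c"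
  shows "\<bar>Mh n h G\<bar> \<le> c"
proof -
  have "\<bar>Mh n h G\<bar> \<le> (\<Sum>z\<in>spins n. \<bar>Qv n (tanh h) z * G z\<bar>)" unfolding Mh_def by (rule sum_abs)
  also have "\<dots> \<le> (\<Sum>z\<in>spins n. Qv n (tanh h) z * c)"
    using Qv_nonneg[OF tanh_le1] assms by (intro sum_mono) (simp add: abs_mult mult_left_mono)
  also have "\<dots> = c" using Qv_sum by (simp flip: sum_distrib_right)
  finally show ?thesis .
qed

lemma exp_sum_Mh:
  "(\<Sum>z\<in>spins n. exp (h * (\<Sum>i<n. z i)) * G z) = (2 * cosh h)^n * Mh n h G"
proof -
  have "exp (h * (\<Sum>i<n. z i)) = (2 * cosh h)^n * Qv n (tanh h) z" if z: "z \<in> spins n" for z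
  proof -
    have "exp (h * (\<Sum>i<n. z i)) = (\<Prod>i<n. exp (h * z i))"
      by (simp add: sum_distrib_left exp_sum)
    also have "\<dots> = (\<Prod>i<n. 2 * cosh h * qb (tanh h) (z i))"
    proof (intro prod.cong refl)
      fix i assume "i \<in> {..<n}"
      hence "z i = -1 \<or> z i = 1" using spins_val[OF z] by auto
      moreover have "cosh h \<noteq> 0" using cosh_real_pos[of h] by linarith
      moreover have "2 * cosh h * qb (tanh h) (z i) = cosh h + sinh h * z i"
        unfolding qb_def tanh_def using \<open>cosh h \<noteq> 0\<close> by (simp add: field_simps)
      ultimately show "exp (h * z i) = 2 * cosh h * qb (tanh h) (z i)"
        using cosh_plus_sinh[of h] cosh_minus_sinh[of h] by auto
    qed
    also have "\<dots> = (2 * cosh h)^n * Qv n (tanh h) z"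
      unfolding Qv_def by (simp add: prod.distrib)
    finally show ?thesis .
  qed
  thus ?thesis unfolding Mh_def by (simp add: sum_distrib_left mult.assoc)
qed

lemma quad_CW:
  assumes "z \<in> spins n" "n > 0"
  shows "quad_form n (Q_CW n) z = ((\<Sum>i<n. z i)^2 - n) / n"
proof -
  have "quad_form n (Q_CW n) z = (\<Sum>i<n. \<Sum>j<n. z i * z j / n) - (\<Sum>i<n. z i * z i / n)"
  proof -
    have "quad_form n (Q_CW n) z = (\<Sum>i<n. (\<Sum>j<n. z i * z j / n) - z i * z i / n)"
      unfolding quad_form_def Q_CW_def
    proof (intro sum.cong refl)
      fix i assume i: "i \<in> {..<n}"
      have "(\<Sum>j<n. z i * (if i = j then 0 else 1 / real n) * z j) = (\<Sum>j<n. z i * z j / n - (if j = i then z i * z i / n else 0))"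
        by (intro sum.cong refl) auto
      also have "\<dots> = (\<Sum>j<n. z i * z j / n) - z i * z i / n" using i by (simp add: sum_subtractf)
      finally show "(\<Sum>j<n. z i * (if i = j then 0 else 1 / real n) * z j) = (\<Sum>j<n. z i * z j / n) - z i * z i / n" .
    qed
    thus ?thesis by (simp add: sum_subtractf)
  qed
  also have "(\<Sum>i<n. \<Sum>j<n. z i * z j / n) = (\<Sum>i<n. z i)^2 / n"
    by (simp add: power2_eq_square sum_product sum_divide_distrib)
  also have "(\<Sum>i<n. z i * z i / n) = 1"
    using spins_sq[OF assms(1)] assms(2) by (simp add: power2_eq_square)
  finally show ?thesis using assms(2) by (simp add: field_simps)
qed

lemma HS_integral:
  "has_bochner_integral lborel (\<lambda>w. exp (- (w^2) / 2 + a * w)) (sqrt (2 * pi) * exp (a^2 / 2))"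
proof -
  have "has_bochner_integral lborel (\<lambda>w. (sqrt (2 * pi) * exp (a^2 / 2)) * normal_density a 1 w) ((sqrt (2 * pi) * exp (a^2 / 2)) * 1)"
    by (intro has_bochner_integral_mult_right) (simp add: has_bochner_integral_integral_eq integrable_normal_density has_bochner_integral_iff)
  moreover have "(sqrt (2 * pi) * exp (a^2 / 2)) * normal_density a 1 w = exp (- (w^2) / 2 + a * w)" for w
    unfolding normal_density_def by (simp add: power2_diff field_simps flip: exp_add)
  ultimately show ?thesis by simp
qed

lemma gauss4_integral:
  "has_bochner_integral lborel (\<lambda>w. exp (- (w^2) / 4)) (2 * sqrt pi)"
proof -
  have "has_bochner_integral lborel (\<lambda>w. (2 * sqrt pi) * normal_density 0 (sqrt 2) w) ((2 * sqrt pi) * 1)"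
    by (intro has_bochner_integral_mult_right) (simp add: has_bochner_integral_iff)
  moreover have "(2 * sqrt pi) * normal_density 0 (sqrt 2) w = exp (- (w^2) / 4)" for w
  proof -
    have "sqrt (2 * pi * 2) = 2 * sqrt pi" by (simp add: real_sqrt_mult)
    thus ?thesis unfolding normal_density_def by simp
  qed
  ultimately show ?thesis by simp
qed

lemma cosh_le_exp_abs: "cosh (h::real) \<le> exp \<bar>h\<bar>"
proof -
  have "exp h \<le> exp \<bar>h\<bar>" "exp (-h) \<le> exp \<bar>h\<bar>" by auto
  hence "exp h + exp (-h) \<le> exp \<bar>h\<bar> * 2" by linarith
  thus ?thesis unfolding cosh_def by (simp add: scaleR_conv_of_real)
qed

lemma tail_pt:
  fixes \<beta> H w :: real
  assumes "\<beta> \<ge> 0" "n > 0" "8 * \<beta> \<le> H" "H < \<bar>sqrt (\<beta> / n) * w\<bar>"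
  shows "exp (- (w^2) / 2) * (2 * cosh (sqrt (\<beta> / n) * w))^n \<le> 2^n * exp (- (n * H)) * exp (- (w^2) / 4)"
proof -
  define c where "c = sqrt (\<beta> / n)"
  define h where "h = c * w"
  have \<beta>: "\<beta> > 0" using assms unfolding c_def by (cases "\<beta> = 0") auto
  have c2: "c^2 = \<beta> / n" unfolding c_def using \<beta> by simp
  have hH: "H < \<bar>h\<bar>" using assms unfolding h_def c_def by simp
  have w2: "w^2 = h^2 * n / \<beta>" unfolding h_def using c2 \<beta> assms(2) by (simp add: power_mult_distrib field_simps)
  have key: "\<bar>h\<bar> + H \<le> h^2 / (4 * \<beta>)"
  proof -
    have "2 \<le> \<bar>h\<bar> / (4 * \<beta>)" using hH assms(3) \<beta> by (simp add: field_simps)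
    hence "\<bar>h\<bar> * 2 \<le> \<bar>h\<bar> * (\<bar>h\<bar> / (4 * \<beta>))" by (intro mult_left_mono) auto
    moreover have "\<bar>h\<bar> * (\<bar>h\<bar> / (4 * \<beta>)) = h^2 / (4 * \<beta>)" by (simp add: power2_eq_square)
    ultimately show ?thesis using hH by linarith
  qed
  have ex: "n * \<bar>h\<bar> + n * H \<le> w^2 / 4"
  proof -
    have "n * (\<bar>h\<bar> + H) \<le> n * (h^2 / (4 * \<beta>))" using key by (intro mult_left_mono) auto
    thus ?thesis unfolding w2 by (simp add: field_simps)
  qed
  have "(2 * cosh h)^n \<le> (2 * exp \<bar>h\<bar>)^n"
    by (intro power_mono) (use cosh_le_exp_abs[of h] in auto)
  also have "\<dots> = 2^n * exp (n * \<bar>h\<bar>)" by (simp add: power_mult_distrib exp_of_nat_mult)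
  finally have "exp (- (w^2) / 2) * (2 * cosh h)^n \<le> exp (- (w^2) / 2) * (2^n * exp (n * \<bar>h\<bar>))"
    by (intro mult_left_mono) auto
  also have "\<dots> = 2^n * exp (- (w^2) / 2 + n * \<bar>h\<bar>)" by (simp only: exp_add mult_ac)
  also have "\<dots> \<le> 2^n * exp (- (n * H) + - (w^2) / 4)"
    using ex by (intro mult_left_mono) auto
  also have "\<dots> = 2^n * exp (- (n * H)) * exp (- (w^2) / 4)" by (simp only: exp_add mult_ac)
  finally show ?thesis unfolding h_def c_def .
qed

lemma HS_rep:
  fixes \<beta> :: real and G :: "(nat \<Rightarrow> real) \<Rightarrow> real"
  assumes "\<beta> \<ge> 0" "n > 0"
  defines "c \<equiv> sqrt (\<beta> / n)"
  shows "integrable lborel (\<lambda>w. exp (- (w^2) / 2) * (2 * cosh (c * w))^n * Mh n (c * w) G)"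
    and "(\<Sum>z\<in>spins n. exp (\<beta> / 2 * quad_form n (Q_CW n) z) * G z)
       = exp (- \<beta> / 2) / sqrt (2 * pi) * (\<integral>w. exp (- (w^2) / 2) * (2 * cosh (c * w))^n * Mh n (c * w) G \<partial>lborel)"
proof -
  define S where "S z = (\<Sum>i<n. z i)" for z :: "nat \<Rightarrow> real"
  have c2: "c^2 = \<beta> / n" unfolding c_def using assms by simp
  have pt: "(\<Sum>z\<in>spins n. G z * exp (- (w^2) / 2 + c * S z * w)) = exp (- (w^2) / 2) * (2 * cosh (c * w))^n * Mh n (c * w) G" for w
  proof -
    have "(\<Sum>z\<in>spins n. G z * exp (- (w^2) / 2 + c * S z * w)) = exp (- (w^2) / 2) * (\<Sum>z\<in>spins n. exp ((c * w) * (\<Sum>i<n. z i)) * G z)"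
    proof -
      have e: "G z * exp (- (w^2) / 2 + c * S z * w) = exp (- (w^2) / 2) * (exp ((c * w) * (\<Sum>i<n. z i)) * G z)" for z
        unfolding S_def by (simp only: exp_add mult_ac)
      have "(\<Sum>z\<in>spins n. G z * exp (- (w^2) / 2 + c * S z * w)) = (\<Sum>z\<in>spins n. exp (- (w^2) / 2) * (exp ((c * w) * (\<Sum>i<n. z i)) * G z))"
        by (intro sum.cong refl e)
      thus ?thesis by (simp only: sum_distrib_left)
    qed
    thus ?thesis by (simp add: exp_sum_Mh)
  qed
  have int: "integrable lborel (\<lambda>w. G z * exp (- (w^2) / 2 + c * S z * w))" for z
    using HS_integral[of "c * S z"] by (intro integrable_mult_right) (auto simp: has_bochner_integral_iff)
  have "integrable lborel (\<lambda>w. \<Sum>z\<in>spins n. G z * exp (- (w^2) / 2 + c * S z * w))"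
    using int by simp
  thus "integrable lborel (\<lambda>w. exp (- (w^2) / 2) * (2 * cosh (c * w))^n * Mh n (c * w) G)"
    unfolding pt .
  have q: "exp (\<beta> / 2 * quad_form n (Q_CW n) z) = exp (- \<beta> / 2) * exp ((c * S z)^2 / 2)" if "z \<in> spins n" for z
  proof -
    have "\<beta> / 2 * quad_form n (Q_CW n) z = - \<beta> / 2 + (c * S z)^2 / 2"
      unfolding quad_CW[OF that assms(2)] power_mult_distrib c2 S_def using assms(2) by (simp add: field_simps)
    thus ?thesis by (simp only: exp_add[symmetric])
  qed
  have "(\<Sum>z\<in>spins n. exp (\<beta> / 2 * quad_form n (Q_CW n) z) * G z)
     = (\<Sum>z\<in>spins n. exp (- \<beta> / 2) / sqrt (2 * pi) * (\<integral>w. G z * exp (- (w^2) / 2 + c * S z * w) \<partial>lborel))"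
  proof (intro sum.cong refl)
    fix z assume z: "z \<in> spins n"
    have I0: "(\<integral>w. exp (- (w^2) / 2 + (c * S z) * w) \<partial>lborel) = sqrt (2 * pi) * exp ((c * S z)^2 / 2)"
      by (rule has_bochner_integral_integral_eq[OF HS_integral])
    have J: "(\<integral>w. G z * exp (- (w^2) / 2 + c * S z * w) \<partial>lborel) = G z * (sqrt (2 * pi) * exp ((c * S z)^2 / 2))"
      unfolding integral_mult_right_zero I0 ..
    have "sqrt (2 * pi) > 0" by simp
    thus "exp (\<beta> / 2 * quad_form n (Q_CW n) z) * G z = exp (- \<beta> / 2) / sqrt (2 * pi) * (\<integral>w. G z * exp (- (w^2) / 2 + c * S z * w) \<partial>lborel)"
      unfolding q[OF z] J by (simp add: field_simps)
  qed
  also have "\<dots> = exp (- \<beta> / 2) / sqrt (2 * pi) * (\<integral>w. (\<Sum>z\<in>spins n. G z * exp (- (w^2) / 2 + c * S z * w)) \<partial>lborel)"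
    by (simp only: Bochner_Integration.integral_sum[OF int] sum_distrib_left)
  finally show "(\<Sum>z\<in>spins n. exp (\<beta> / 2 * quad_form n (Q_CW n) z) * G z)
       = exp (- \<beta> / 2) / sqrt (2 * pi) * (\<integral>w. exp (- (w^2) / 2) * (2 * cosh (c * w))^n * Mh n (c * w) G \<partial>lborel)"
    unfolding pt .
qed

lemma CW_bound:
  fixes \<beta> H \<epsilon> :: real and G :: "(nat \<Rightarrow> real) \<Rightarrow> real"
  assumes \<beta>: "\<beta> \<ge> 0" and n: "n > 0" and H: "H > 0" "8 * \<beta> \<le> H"
    and Gb: "\<And>z. z \<in> spins n \<Longrightarrow> \<bar>G z\<bar> \<le> 2"
    and MG: "\<And>h. \<bar>h\<bar> \<le> H \<Longrightarrow> \<bar>Mh n h G\<bar> \<le> \<epsilon>"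
  shows "\<bar>\<Sum>z\<in>spins n. exp (\<beta> / 2 * quad_form n (Q_CW n) z) / ising_Z n \<beta> (Q_CW n) * G z\<bar>
     \<le> \<epsilon> + 2 * sqrt 2 * exp (- (n * H))"
proof -
  define c where "c = sqrt (\<beta> / n)"
  define R where "R w = exp (- (w^2) / 2) * (2 * cosh (c * w))^n" for w
  define K where "K = exp (- \<beta> / 2) / sqrt (2 * pi)"
  define T where "T = {w::real. H < \<bar>c * w\<bar>}"
  have K: "K > 0" unfolding K_def by simp
  have eps: "\<epsilon> \<ge> 0" using MG[of 0] H by linarith
  have intRM: "integrable lborel (\<lambda>w. R w * Mh n (c * w) G)"
    using HS_rep(1)[OF \<beta> n, of G] unfolding R_def c_def .
  have intR: "integrable lborel R"
    using HS_rep(1)[OF \<beta> n, of "\<lambda>z. 1"] unfolding R_def c_def Mh_one by simp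
  have num: "(\<Sum>z\<in>spins n. exp (\<beta> / 2 * quad_form n (Q_CW n) z) * G z) = K * (\<integral>w. R w * Mh n (c * w) G \<partial>lborel)"
    using HS_rep(2)[OF \<beta> n, of G] unfolding R_def c_def K_def .
  have den: "ising_Z n \<beta> (Q_CW n) = K * (\<integral>w. R w \<partial>lborel)"
    using HS_rep(2)[OF \<beta> n, of "\<lambda>z. 1"] unfolding R_def c_def K_def ising_Z_def Mh_one by simp
  have Rnn: "R w \<ge> 0" for w unfolding R_def by simp
  have Tm: "T \<in> sets lborel" unfolding T_def by measurable
  have intI: "integrable lborel (\<lambda>w. indicator T w * R w)"
    using integrable_mult_indicator[OF _ intR, of T] Tm by simp
  have Rlow: "2^n * exp (- (w^2) / 2) \<le> R w" for w
  proof -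
    have "2^n \<le> (2 * cosh (c * w))^n" by (intro power_mono) (use cosh_real_ge_1[of "c * w"] in auto)
    thus ?thesis unfolding R_def by (simp add: mult.commute)
  qed
  have g2: "has_bochner_integral lborel (\<lambda>w. exp (- (w^2) / 2)) (sqrt (2 * pi))"
    using HS_integral[of 0] by simp
  have IR: "(\<integral>w. R w \<partial>lborel) \<ge> 2^n * sqrt (2 * pi)"
  proof -
    have "(integral\<^sup>L lborel (\<lambda>w::real. 2^n * exp (- (w^2) / 2))) \<le> (\<integral>w. R w \<partial>lborel)"
      using g2 intR Rlow by (intro integral_mono) (auto simp: has_bochner_integral_iff)
    moreover have "(integral\<^sup>L lborel (\<lambda>w::real. 2^n * exp (- (w^2) / 2))) = 2^n * sqrt (2 * pi)"
      using g2 by (simp add: has_bochner_integral_iff)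
    ultimately show ?thesis by simp
  qed
  have IRpos: "(\<integral>w. R w \<partial>lborel) > 0"
    using IR by (smt (verit) real_sqrt_gt_zero pi_gt_zero zero_less_power mult_pos_pos)
  have g4: "integrable lborel (\<lambda>w::real. exp (- (w^2) / 4))" "(integral\<^sup>L lborel (\<lambda>w::real. exp (- (w^2) / 4))) = 2 * sqrt pi"
    using gauss4_integral by (auto simp: has_bochner_integral_iff)
  have IT: "(\<integral>w. indicator T w * R w \<partial>lborel) \<le> 2^n * exp (- (n * H)) * (2 * sqrt pi)"
  proof -
    have "(\<integral>w. indicator T w * R w \<partial>lborel) \<le> (integral\<^sup>L lborel (\<lambda>w::real. 2^n * exp (- (n * H)) * exp (- (w^2) / 4)))"
    proof (intro integral_mono intI)
      show "integrable lborel (\<lambda>w::real. 2^n * exp (- (n * H)) * exp (- (w^2) / 4))" using g4 by simp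
      fix w :: real
      show "indicator T w * R w \<le> 2^n * exp (- (n * H)) * exp (- (w^2) / 4)"
      proof (cases "w \<in> T")
        case True
        thus ?thesis using tail_pt[OF \<beta> n H(2), of w] unfolding T_def R_def c_def by simp
      qed simp
    qed
    also have "\<dots> = 2^n * exp (- (n * H)) * (2 * sqrt pi)" using g4 by simp
    finally show ?thesis .
  qed
  have pt: "R w * Mh n (c * w) G \<le> \<epsilon> * R w + 2 * (indicator T w * R w)"
     "- (R w * Mh n (c * w) G) \<le> \<epsilon> * R w + 2 * (indicator T w * R w)" for w
  proof -
    have "\<bar>R w * Mh n (c * w) G\<bar> \<le> \<epsilon> * R w + 2 * (indicator T w * R w)"
    proof (cases "w \<in> T")
      case True
      have "\<bar>Mh n (c * w) G\<bar> \<le> 2" by (rule Mh_bound[OF Gb])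
      hence "\<bar>R w * Mh n (c * w) G\<bar> \<le> R w * 2" using Rnn[of w] by (simp add: abs_mult mult_left_mono)
      moreover have "0 \<le> \<epsilon> * R w" using eps Rnn[of w] by simp
      ultimately show ?thesis using True by simp
    next
      case False
      hence "\<bar>c * w\<bar> \<le> H" unfolding T_def by simp
      hence "\<bar>Mh n (c * w) G\<bar> \<le> \<epsilon>" by (rule MG)
      hence "\<bar>R w * Mh n (c * w) G\<bar> \<le> R w * \<epsilon>" using Rnn[of w] by (simp add: abs_mult mult_left_mono)
      thus ?thesis using False by (simp add: mult.commute)
    qed
    thus "R w * Mh n (c * w) G \<le> \<epsilon> * R w + 2 * (indicator T w * R w)"
      "- (R w * Mh n (c * w) G) \<le> \<epsilon> * R w + 2 * (indicator T w * R w)" by linarith+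
  qed
  have intB: "integrable lborel (\<lambda>w. \<epsilon> * R w + 2 * (indicator T w * R w))"
    using intR intI by simp
  have "(\<integral>w. R w * Mh n (c * w) G \<partial>lborel) \<le> (\<integral>w. \<epsilon> * R w + 2 * (indicator T w * R w) \<partial>lborel)"
    by (intro integral_mono intRM intB pt)
  moreover have "- (\<integral>w. R w * Mh n (c * w) G \<partial>lborel) \<le> (\<integral>w. \<epsilon> * R w + 2 * (indicator T w * R w) \<partial>lborel)"
  proof -
    have "(\<integral>w. - (R w * Mh n (c * w) G) \<partial>lborel) \<le> (\<integral>w. \<epsilon> * R w + 2 * (indicator T w * R w) \<partial>lborel)"
      using intRM by (intro integral_mono intB pt) simp
    thus ?thesis by simp
  qed
  moreover have "(\<integral>w. \<epsilon> * R w + 2 * (indicator T w * R w) \<partial>lborel) = \<epsilon> * (\<integral>w. R w \<partial>lborel) + 2 * (\<integral>w. indicator T w * R w \<partial>lborel)"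
    using intR intI by simp
  ultimately have J: "\<bar>\<integral>w. R w * Mh n (c * w) G \<partial>lborel\<bar> \<le> \<epsilon> * (\<integral>w. R w \<partial>lborel) + 2 * (\<integral>w. indicator T w * R w \<partial>lborel)"
    by linarith
  have "(\<Sum>z\<in>spins n. exp (\<beta> / 2 * quad_form n (Q_CW n) z) / ising_Z n \<beta> (Q_CW n) * G z)
      = (\<integral>w. R w * Mh n (c * w) G \<partial>lborel) / (\<integral>w. R w \<partial>lborel)"
  proof -
    have "(\<Sum>z\<in>spins n. exp (\<beta> / 2 * quad_form n (Q_CW n) z) / ising_Z n \<beta> (Q_CW n) * G z)
        = (\<Sum>z\<in>spins n. exp (\<beta> / 2 * quad_form n (Q_CW n) z) * G z) / ising_Z n \<beta> (Q_CW n)"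
      by (simp add: sum_divide_distrib)
    thus ?thesis unfolding num den using K by simp
  qed
  hence "\<bar>\<Sum>z\<in>spins n. exp (\<beta> / 2 * quad_form n (Q_CW n) z) / ising_Z n \<beta> (Q_CW n) * G z\<bar>
      \<le> (\<epsilon> * (\<integral>w. R w \<partial>lborel) + 2 * (\<integral>w. indicator T w * R w \<partial>lborel)) / (\<integral>w. R w \<partial>lborel)"
    using J IRpos by (simp add: abs_divide divide_right_mono)
  also have "\<dots> = \<epsilon> + 2 * ((\<integral>w. indicator T w * R w \<partial>lborel) / (\<integral>w. R w \<partial>lborel))"
    using IRpos by (simp add: field_simps)
  also have "\<dots> \<le> \<epsilon> + 2 * ((2^n * exp (- (n * H)) * (2 * sqrt pi)) / (2^n * sqrt (2 * pi)))"
  proof -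
    have "(\<integral>w. indicator T w * R w \<partial>lborel) \<ge> 0" by (intro integral_nonneg_AE) (auto simp: Rnn)
    hence "(\<integral>w. indicator T w * R w \<partial>lborel) / (\<integral>w. R w \<partial>lborel) \<le> (2^n * exp (- (n * H)) * (2 * sqrt pi)) / (2^n * sqrt (2 * pi))"
      using IT IR by (intro frac_le) auto
    thus ?thesis by simp
  qed
  also have "\<dots> = \<epsilon> + 2 * sqrt 2 * exp (- (n * H))"
  proof -
    have "sqrt (2 * pi) = sqrt 2 * sqrt pi" by (simp add: real_sqrt_mult)
    moreover have "sqrt 2 * sqrt 2 = (2::real)" by simp
    ultimately show ?thesis by (simp add: field_simps)
  qed
  finally show ?thesis .
qed




definition pw :: "nat \<Rightarrow> real \<Rightarrow> (nat \<Rightarrow> real) \<Rightarrow> real" where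
  "pw n \<beta> z = exp (\<beta> / 2 * quad_form n (Q_CW n) z) / ising_Z n \<beta> (Q_CW n)"

lemma spins_ne: "spins n \<noteq> {}"
  unfolding spins_def by (simp add: PiE_eq_empty_iff)

lemma ising_Z_pos: "ising_Z n \<beta> Q > 0"
  unfolding ising_Z_def using spins_ne by (intro sum_pos) auto

lemma pw_nonneg: "pw n \<beta> z \<ge> 0"
  unfolding pw_def using ising_Z_pos[of n \<beta> "Q_CW n"] by simp

lemma pw_sum: "(\<Sum>z\<in>spins n. pw n \<beta> z) = 1"
  unfolding pw_def using ising_Z_pos[of n \<beta> "Q_CW n"] by (simp add: ising_Z_def flip: sum_divide_distrib)

lemma pw_avg_bound: assumes "\<And>z. z \<in> spins n \<Longrightarrow> \<bar>G z\<bar> \<le> c"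
  shows "\<bar>\<Sum>z\<in>spins n. pw n \<beta> z * G z\<bar> \<le> c"
proof -
  have "\<bar>\<Sum>z\<in>spins n. pw n \<beta> z * G z\<bar> \<le> (\<Sum>z\<in>spins n. pw n \<beta> z * c)"
    using assms pw_nonneg by (intro order.trans[OF sum_abs] sum_mono) (simp add: abs_mult mult_left_mono)
  also have "\<dots> = c" using pw_sum by (simp flip: sum_distrib_right)
  finally show ?thesis .
qed

lemma Mh_swap: "Mh n h (\<lambda>x. \<Sum>y\<in>Y. f y * D x y) = (\<Sum>y\<in>Y. f y * Mh n h (\<lambda>x. D x y))"
  unfolding Mh_def sum_distrib_left by (rule trans[OF sum.swap]) (simp add: mult_ac)

lemma nested_bound:
  fixes \<beta>1 \<beta>2 H \<epsilon> :: real and D :: "(nat \<Rightarrow> real) \<Rightarrow> (nat \<Rightarrow> real) \<Rightarrow> real"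
  assumes \<beta>: "\<beta>1 \<ge> 0" "\<beta>2 \<ge> 0" and n: "n > 0" and H: "H > 0" "8 * \<beta>1 \<le> H" "8 * \<beta>2 \<le> H"
    and Db: "\<And>x y. x \<in> spins n \<Longrightarrow> y \<in> spins n \<Longrightarrow> \<bar>D x y\<bar> \<le> 2"
    and MM: "\<And>h1 h2. \<bar>h1\<bar> \<le> H \<Longrightarrow> \<bar>h2\<bar> \<le> H \<Longrightarrow> \<bar>Mh n h1 (\<lambda>x. Mh n h2 (\<lambda>y. D x y))\<bar> \<le> \<epsilon>"
  shows "\<bar>\<Sum>x\<in>spins n. pw n \<beta>1 x * (\<Sum>y\<in>spins n. pw n \<beta>2 y * D x y)\<bar> \<le> \<epsilon> + 4 * sqrt 2 * exp (- (n * H))"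
proof -
  define G1 where "G1 x = (\<Sum>y\<in>spins n. pw n \<beta>2 y * D x y)" for x
  have G1b: "\<bar>G1 x\<bar> \<le> 2" if "x \<in> spins n" for x
    unfolding G1_def using Db[OF that] by (rule pw_avg_bound)
  have M1: "\<bar>Mh n h1 G1\<bar> \<le> \<epsilon> + 2 * sqrt 2 * exp (- (n * H))" if h1: "\<bar>h1\<bar> \<le> H" for h1
  proof -
    have "Mh n h1 G1 = (\<Sum>y\<in>spins n. pw n \<beta>2 y * Mh n h1 (\<lambda>x. D x y))"
      unfolding G1_def by (rule Mh_swap)
    also have "\<bar>\<dots>\<bar> \<le> \<epsilon> + 2 * sqrt 2 * exp (- (n * H))"
      unfolding pw_def
    proof (rule CW_bound[OF \<beta>(2) n H(1) H(3)])
      show "\<bar>Mh n h1 (\<lambda>x. D x y)\<bar> \<le> 2" if "y \<in> spins n" for y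
        by (rule Mh_bound) (use Db that in auto)
      show "\<bar>Mh n h2 (\<lambda>y. Mh n h1 (\<lambda>x. D x y))\<bar> \<le> \<epsilon>" if "\<bar>h2\<bar> \<le> H" for h2
      proof -
        have "Mh n h2 (\<lambda>y. Mh n h1 (\<lambda>x. D x y)) = Mh n h1 (\<lambda>x. Mh n h2 (\<lambda>y. D x y))"
          unfolding Mh_def sum_distrib_left by (rule trans[OF sum.swap]) (simp add: mult_ac)
        thus ?thesis using MM[OF h1 that] by simp
      qed
    qed
    finally show ?thesis .
  qed
  have "\<bar>\<Sum>x\<in>spins n. pw n \<beta>1 x * G1 x\<bar> \<le> (\<epsilon> + 2 * sqrt 2 * exp (- (n * H))) + 2 * sqrt 2 * exp (- (n * H))"
    unfolding pw_def by (rule CW_bound[OF \<beta>(1) n H(1) H(2) G1b M1])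
  thus ?thesis unfolding G1_def by simp
qed

lemma EE_Mh: "Mh n h1 (\<lambda>x. Mh n h2 (\<lambda>y. D x y)) = EE n (tanh h1) (tanh h2) D"
  unfolding Mh_def EE_def by (simp add: sum_distrib_left mult_ac)

lemma Re_EE: "Re (EE n a b G) = EE n a b (\<lambda>x y. Re (G x y))"
  unfolding EE_def by simp

lemma Im_EE: "Im (EE n a b G) = EE n a b (\<lambda>x y. Im (G x y))"
  unfolding EE_def by simp

lemma tanh_bound: assumes "\<bar>h\<bar> \<le> H" shows "\<bar>tanh h\<bar> \<le> tanh (H::real)"
proof -
  have "tanh \<bar>h\<bar> \<le> tanh H" using assms by (simp add: strict_mono_less_eq[OF tanh_real_strict_mono] del: tanh_real_abs)
  thus ?thesis by simp
qed

lemma Re_iexp: "Re (iexp \<theta>) = cos \<theta>" by (simp add: Re_exp)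
lemma Im_iexp: "Im (iexp \<theta>) = sin \<theta>" by (simp add: Im_exp)

lemma EE_const: "EE n a b (\<lambda>x y. c) = (c::'c::{real_algebra_1,comm_ring_1})"
proof -
  have "EE n a b (\<lambda>x y. c * 1) = c * EE n a b (\<lambda>x y. 1)" by (rule EE_cmult)
  moreover have "EE n a b (\<lambda>x y. 1) = (1::'c)" by (rule EE_one)
  ultimately show ?thesis by simp
qed

lemma MM_bounds:
  assumes H: "H > 0" and h: "\<bar>h1\<bar> \<le> H" "\<bar>h2\<bar> \<le> H" and n: "n > 0" and t: "t^2 \<le> 4 * n"
  shows "\<bar>Mh n h1 (\<lambda>x. Mh n h2 (\<lambda>y. cos (t * (sqrt n * sample_corr n x y)) - exp (- (t^2) / 2)))\<bar> \<le> Bnd (tanh H) n t"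
    "\<bar>Mh n h1 (\<lambda>x. Mh n h2 (\<lambda>y. sin (t * (sqrt n * sample_corr n x y))))\<bar> \<le> Bnd (tanh H) n t"
proof -
  define Z where "Z = EE n (tanh h1) (tanh h2) (\<lambda>x y. iexp (t * (sqrt n * sample_corr n x y)))"
  have A: "0 \<le> tanh H" "tanh H < 1" "\<bar>tanh h1\<bar> \<le> tanh H" "\<bar>tanh h2\<bar> \<le> tanh H"
    using H tanh_real_lt_1 tanh_bound h by (auto simp: less_imp_le)
  have B: "cmod (Z - of_real (exp (- (t^2) / 2))) \<le> Bnd (tanh H) n t"
    unfolding Z_def by (rule D_bound[OF A n t])
  have "EE n (tanh h1) (tanh h2) (\<lambda>x y. cos (t * (sqrt n * sample_corr n x y)) - exp (- (t^2) / 2))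
      = Re (Z - of_real (exp (- (t^2) / 2)))"
  proof -
    have "EE n (tanh h1) (tanh h2) (\<lambda>x y. cos (t * (sqrt n * sample_corr n x y))) = Re Z"
      unfolding Z_def Re_EE by (simp only: Re_iexp)
    thus ?thesis by (simp add: EE_diff EE_const)
  qed
  moreover have "\<bar>Re (Z - of_real (exp (- (t^2) / 2)))\<bar> \<le> cmod (Z - of_real (exp (- (t^2) / 2)))"
    by (rule abs_Re_le_cmod)
  ultimately show "\<bar>Mh n h1 (\<lambda>x. Mh n h2 (\<lambda>y. cos (t * (sqrt n * sample_corr n x y)) - exp (- (t^2) / 2)))\<bar> \<le> Bnd (tanh H) n t"
    using B unfolding EE_Mh by linarith
  have "EE n (tanh h1) (tanh h2) (\<lambda>x y. sin (t * (sqrt n * sample_corr n x y)))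
      = Im (Z - of_real (exp (- (t^2) / 2)))"
  proof -
    have "EE n (tanh h1) (tanh h2) (\<lambda>x y. sin (t * (sqrt n * sample_corr n x y))) = Im Z"
      unfolding Z_def Im_EE by (simp only: Im_iexp)
    thus ?thesis by simp
  qed
  moreover have "\<bar>Im (Z - of_real (exp (- (t^2) / 2)))\<bar> \<le> cmod (Z - of_real (exp (- (t^2) / 2)))"
    by (rule abs_Im_le_cmod)
  ultimately show "\<bar>Mh n h1 (\<lambda>x. Mh n h2 (\<lambda>y. sin (t * (sqrt n * sample_corr n x y))))\<bar> \<le> Bnd (tanh H) n t"
    using B unfolding EE_Mh by linarith
qed

lemma sum_char_bound:
  fixes \<beta>1 \<beta>2 H t :: real
  assumes \<beta>: "\<beta>1 \<ge> 0" "\<beta>2 \<ge> 0" and n: "n > 0" and H: "H > 0" "8 * \<beta>1 \<le> H" "8 * \<beta>2 \<le> H"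
    and t: "t^2 \<le> real (4 * n)"
  shows "cmod ((\<Sum>x\<in>spins n. \<Sum>y\<in>spins n. of_real (pw n \<beta>1 x * pw n \<beta>2 y) * iexp (t * (sqrt n * sample_corr n x y)))
       - of_real (exp (- (t^2) / 2))) \<le> 2 * (Bnd (tanh H) n t + 4 * sqrt 2 * exp (- (n * H)))"
proof -
  define e where "e = exp (- (t^2) / 2)"
  define F where "F x y = t * (sqrt n * sample_corr n x y)" for x y
  define V where "V = (\<Sum>x\<in>spins n. \<Sum>y\<in>spins n. of_real (pw n \<beta>1 x * pw n \<beta>2 y) * iexp (F x y))"
  have e: "0 < e" "e \<le> 1" unfolding e_def by auto
  have one: "(\<Sum>x\<in>spins n. \<Sum>y\<in>spins n. pw n \<beta>1 x * pw n \<beta>2 y) = 1"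
    by (simp add: pw_sum flip: sum_distrib_left sum_distrib_right)
  have "V - of_real e = (\<Sum>x\<in>spins n. \<Sum>y\<in>spins n. of_real (pw n \<beta>1 x * pw n \<beta>2 y) * (iexp (F x y) - of_real e))"
  proof -
    have "(\<Sum>x\<in>spins n. \<Sum>y\<in>spins n. of_real (pw n \<beta>1 x * pw n \<beta>2 y) * (of_real e :: complex)) = of_real e"
    proof -
      have "(\<Sum>x\<in>spins n. \<Sum>y\<in>spins n. of_real (pw n \<beta>1 x * pw n \<beta>2 y) :: complex)
          = of_real (\<Sum>x\<in>spins n. \<Sum>y\<in>spins n. pw n \<beta>1 x * pw n \<beta>2 y)"
        by (simp only: of_real_sum)
      also have "\<dots> = 1" unfolding one by simp
      finally show ?thesis by (simp only: sum_distrib_right[symmetric] mult_1)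
    qed
    thus ?thesis unfolding V_def by (simp add: right_diff_distrib sum_subtractf)
  qed
  hence ReV: "Re (V - of_real e) = (\<Sum>x\<in>spins n. pw n \<beta>1 x * (\<Sum>y\<in>spins n. pw n \<beta>2 y * (cos (F x y) - e)))"
    and ImV: "Im (V - of_real e) = (\<Sum>x\<in>spins n. pw n \<beta>1 x * (\<Sum>y\<in>spins n. pw n \<beta>2 y * sin (F x y)))"
    by (simp_all add: sum_distrib_left Re_iexp Im_iexp mult_ac)
  define \<epsilon> where "\<epsilon> = Bnd (tanh H) n t"
  have "\<bar>Re (V - of_real e)\<bar> \<le> \<epsilon> + 4 * sqrt 2 * exp (- (n * H))"
    unfolding ReV
  proof (rule nested_bound[OF \<beta> n H])
    show "\<bar>cos (F x y) - e\<bar> \<le> 2" for x y using e abs_cos_le_one[of "F x y"] by (simp only: abs_le_iff) linarith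
    show "\<bar>Mh n h1 (\<lambda>x. Mh n h2 (\<lambda>y. cos (F x y) - e))\<bar> \<le> \<epsilon>" if "\<bar>h1\<bar> \<le> H" "\<bar>h2\<bar> \<le> H" for h1 h2
      unfolding F_def e_def \<epsilon>_def by (rule MM_bounds(1)[OF H(1) that n t])
  qed
  moreover have "\<bar>Im (V - of_real e)\<bar> \<le> \<epsilon> + 4 * sqrt 2 * exp (- (n * H))"
    unfolding ImV
  proof (rule nested_bound[OF \<beta> n H])
    show "\<bar>sin (F x y)\<bar> \<le> 2" for x y using abs_sin_le_one[of "F x y"] by linarith
    show "\<bar>Mh n h1 (\<lambda>x. Mh n h2 (\<lambda>y. sin (F x y)))\<bar> \<le> \<epsilon>" if "\<bar>h1\<bar> \<le> H" "\<bar>h2\<bar> \<le> H" for h1 h2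
      unfolding F_def \<epsilon>_def by (rule MM_bounds(2)[OF H(1) that n t])
  qed
  ultimately have "cmod (V - of_real e) \<le> (\<epsilon> + 4 * sqrt 2 * exp (- (n * H))) + (\<epsilon> + 4 * sqrt 2 * exp (- (n * H)))"
    using cmod_le[of "V - of_real e"] by (rule add_mono[THEN order_trans[rotated]])
  hence "cmod (V - of_real e) \<le> 2 * (\<epsilon> + 4 * sqrt 2 * exp (- (n * H)))" by (simp only: mult_2)
  thus ?thesis unfolding V_def F_def e_def \<epsilon>_def .
qed




lemma ising_pw: "ising n \<beta> (Q_CW n) = point_measure (spins n) (\<lambda>z. ennreal (pw n \<beta> z))"
  unfolding ising_def pw_def ..

lemma integral_ising:
  fixes g :: "(nat \<Rightarrow> real) \<Rightarrow> 'b::{banach, second_countable_topology}"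
  shows "integral\<^sup>L (ising n \<beta> (Q_CW n)) g = (\<Sum>z\<in>spins n. pw n \<beta> z *\<^sub>R g z)"
  unfolding ising_pw by (rule lebesgue_integral_point_measure_finite) (auto simp: pw_nonneg)

lemma prob_ising: "prob_space (ising n \<beta> (Q_CW n))"
  unfolding ising_pw
proof (rule prob_space_point_measure)
  show "(\<Sum>s\<in>spins n. ennreal (pw n \<beta> s)) = 1"
    by (subst sum_ennreal) (auto simp: pw_nonneg pw_sum)
qed auto

lemma sets_ising: "sets (ising n \<beta> Q) = sets (count_space (spins n))"
  unfolding ising_def by (rule sets_point_measure_count_space)

lemma space_ising: "space (ising n \<beta> Q) = spins n"
  unfolding ising_def by (simp add: space_point_measure)

lemma meas_pair:
  "f \<in> borel_measurable (ising n \<beta>1 Q1 \<Otimes>\<^sub>M ising n \<beta>2 Q2)"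
proof -
  have "f \<in> borel_measurable (count_space (spins n) \<Otimes>\<^sub>M count_space (spins n))"
    by (rule measurable_pair_measure_countable1) (auto intro: countable_finite)
  thus ?thesis
    by (subst measurable_cong_sets[OF sets_pair_measure_cong[OF sets_ising sets_ising] refl])
qed

lemma pps: "pair_prob_space (ising n \<beta>1 (Q_CW n)) (ising n \<beta>2 (Q_CW n))"
  unfolding pair_prob_space_def pair_sigma_finite_def using prob_ising
  by (auto intro: prob_space_imp_sigma_finite)

lemma char_eq:
  "char (distr (ising n \<beta>1 (Q_CW n) \<Otimes>\<^sub>M ising n \<beta>2 (Q_CW n)) borel (\<lambda>(x, y). sqrt (real n) * sample_corr n x y)) t
   = (\<Sum>x\<in>spins n. \<Sum>y\<in>spins n. of_real (pw n \<beta>1 x * pw n \<beta>2 y) * iexp (t * (sqrt n * sample_corr n x y)))"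
proof -
  interpret p: pair_prob_space "ising n \<beta>1 (Q_CW n)" "ising n \<beta>2 (Q_CW n)" by (rule pps)
  have mi: "(\<lambda>x::real. iexp (t * x)) \<in> borel_measurable borel"
    by (intro borel_measurable_continuous_onI continuous_intros)
  have "char (distr (ising n \<beta>1 (Q_CW n) \<Otimes>\<^sub>M ising n \<beta>2 (Q_CW n)) borel (\<lambda>(x, y). sqrt (real n) * sample_corr n x y)) t
      = (\<integral>p. iexp (t * (case p of (x, y) \<Rightarrow> sqrt (real n) * sample_corr n x y)) \<partial>(ising n \<beta>1 (Q_CW n) \<Otimes>\<^sub>M ising n \<beta>2 (Q_CW n)))"
    unfolding char_def by (rule integral_distr[OF meas_pair mi])
  also have "\<dots> = (\<integral>x. (\<integral>y. iexp (t * (sqrt (real n) * sample_corr n x y)) \<partial>ising n \<beta>2 (Q_CW n)) \<partial>ising n \<beta>1 (Q_CW n))"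
  proof -
    have int: "integrable (ising n \<beta>1 (Q_CW n) \<Otimes>\<^sub>M ising n \<beta>2 (Q_CW n)) (\<lambda>p. iexp (t * (case p of (x, y) \<Rightarrow> sqrt (real n) * sample_corr n x y)))"
      by (rule p.integrable_const_bound[where B=1]) (auto intro: meas_pair)
    show ?thesis using p.integral_fst'[OF int] by simp
  qed
  also have "\<dots> = (\<Sum>x\<in>spins n. \<Sum>y\<in>spins n. of_real (pw n \<beta>1 x * pw n \<beta>2 y) * iexp (t * (sqrt n * sample_corr n x y)))"
    by (simp add: integral_ising scaleR_conv_of_real sum_distrib_left mult_ac)
  finally show ?thesis .
qed

lemma lim_c_sqrt: "(\<lambda>n. c / sqrt (real n)) \<longlonglongrightarrow> 0"
proof -
  have "(\<lambda>n. c * sqrt (inverse (real n))) \<longlonglongrightarrow> c * sqrt 0"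
    by (intro tendsto_intros lim_inverse_n)
  thus ?thesis by (simp add: real_sqrt_inverse divide_inverse)
qed

lemma Bnd_lim: "(\<lambda>n. Bnd A n t) \<longlonglongrightarrow> 0"
proof -
  have l1: "(\<lambda>n. 4 / (real n * etaA A ^ 2)) \<longlonglongrightarrow> 0"
    using lim_const_over_n[of "4 / etaA A ^ 2"] by (simp add: field_simps)
  have l2: "(\<lambda>n. 3 * \<bar>t\<bar> * K1A A / sqrt (real n)) \<longlonglongrightarrow> 0" by (rule lim_c_sqrt)
  have l3: "(\<lambda>n. \<bar>t\<bar>^3 * C0A A / sqrt (real n)) \<longlonglongrightarrow> 0" by (rule lim_c_sqrt)
  have "(\<lambda>n. (1 + (- (t^2) / 2) / real n)^n) \<longlonglongrightarrow> exp (- (t^2) / 2)"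
    by (rule tendsto_exp_limit_sequentially)
  moreover have "(1 + (- (t^2) / 2) / real n) = 1 - t^2 / (2 * real n)" for n
    by (simp add: field_simps)
  ultimately have "(\<lambda>n. (1 - t^2 / (2 * real n))^n) \<longlonglongrightarrow> exp (- (t^2) / 2)" by simp
  hence "(\<lambda>n. (1 - t^2 / (2 * real n))^n - exp (- (t^2) / 2)) \<longlonglongrightarrow> 0"
    by (rule LIM_zero)
  hence l4: "(\<lambda>n. abs ((1 - t^2 / (2 * real n))^n - exp (- (t^2) / 2))) \<longlonglongrightarrow> 0"
    by (rule tendsto_rabs_zero)
  have "(\<lambda>n. 4 / (real n * etaA A ^ 2) + 3 * \<bar>t\<bar> * K1A A / sqrt (real n) + \<bar>t\<bar>^3 * C0A A / sqrt (real n)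
      + abs ((1 - t^2 / (2 * real n))^n - exp (- (t^2) / 2))) \<longlonglongrightarrow> 0 + 0 + 0 + 0"
    by (intro tendsto_add l1 l2 l3 l4)
  thus ?thesis unfolding Bnd_def by simp
qed

lemma lim_exp_nH: assumes "H > 0" shows "(\<lambda>n. exp (- (real n * H))) \<longlonglongrightarrow> 0"
proof -
  have "(\<lambda>n. exp (- H) ^ n) \<longlonglongrightarrow> 0" using assms by (intro LIMSEQ_power_zero) simp
  moreover have "exp (- H) ^ n = exp (- (real n * H))" for n
    by (simp add: exp_of_nat_mult[symmetric])
  ultimately show ?thesis by simp
qed

theorem corollary1:
  fixes \<beta>1 \<beta>2 :: real
  assumes "\<beta>1 \<ge> 0" and "\<beta>2 \<ge> 0"
  shows "weak_conv_m
           (\<lambda>n. distr (ising n \<beta>1 (Q_CW n) \<Otimes>\<^sub>M ising n \<beta>2 (Q_CW n)) borel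
                  (\<lambda>(x, y). sqrt (real n) * sample_corr n x y))
           std_normal_distribution"
proof (rule levy_continuity)
  fix n
  interpret p: pair_prob_space "ising n \<beta>1 (Q_CW n)" "ising n \<beta>2 (Q_CW n)" by (rule pps)
  show "real_distribution (distr (ising n \<beta>1 (Q_CW n) \<Otimes>\<^sub>M ising n \<beta>2 (Q_CW n)) borel
                  (\<lambda>(x, y). sqrt (real n) * sample_corr n x y))"
    by (intro p.real_distribution_distr meas_pair)
next
  show "real_distribution std_normal_distribution" by (rule real_dist_normal_dist)
next
  fix t :: real
  define H where "H = 8 * max \<beta>1 \<beta>2 + 1"
  have H: "H > 0" "8 * \<beta>1 \<le> H" "8 * \<beta>2 \<le> H" unfolding H_def using assms by auto
  define b where "b n = 2 * (Bnd (tanh H) n t + 4 * sqrt 2 * exp (- (real n * H)))" for n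
  have b: "b \<longlonglongrightarrow> 2 * (0 + 4 * sqrt 2 * 0)"
    unfolding b_def by (intro tendsto_intros Bnd_lim lim_exp_nH H(1))
  have ev: "eventually (\<lambda>n. norm (char (distr (ising n \<beta>1 (Q_CW n) \<Otimes>\<^sub>M ising n \<beta>2 (Q_CW n)) borel
                  (\<lambda>(x, y). sqrt (real n) * sample_corr n x y)) t - complex_of_real (exp (- (t^2) / 2))) \<le> b n) sequentially"
  proof (rule eventually_sequentiallyI[of "nat (ceiling (t^2)) + 1"])
    fix n assume n: "nat (ceiling (t^2)) + 1 \<le> n"
    hence n0: "n > 0" by simp
    have "t^2 \<le> real n" using n by linarith
    hence tn: "t^2 \<le> real (4 * n)" by simp
    show "norm (char (distr (ising n \<beta>1 (Q_CW n) \<Otimes>\<^sub>M ising n \<beta>2 (Q_CW n)) borel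
                  (\<lambda>(x, y). sqrt (real n) * sample_corr n x y)) t - complex_of_real (exp (- (t^2) / 2))) \<le> b n"
      unfolding char_eq b_def by (rule sum_char_bound[OF assms n0 H tn])
  qed
  have "(\<lambda>n. char (distr (ising n \<beta>1 (Q_CW n) \<Otimes>\<^sub>M ising n \<beta>2 (Q_CW n)) borel
                  (\<lambda>(x, y). sqrt (real n) * sample_corr n x y)) t - complex_of_real (exp (- (t^2) / 2))) \<longlonglongrightarrow> 0"
    by (rule Lim_null_comparison[OF ev]) (use b in simp)
  hence "(\<lambda>n. char (distr (ising n \<beta>1 (Q_CW n) \<Otimes>\<^sub>M ising n \<beta>2 (Q_CW n)) borel
                  (\<lambda>(x, y). sqrt (real n) * sample_corr n x y)) t) \<longlonglongrightarrow> complex_of_real (exp (- (t^2) / 2))"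
    by (rule LIM_zero_cancel)
  thus "(\<lambda>n. char (distr (ising n \<beta>1 (Q_CW n) \<Otimes>\<^sub>M ising n \<beta>2 (Q_CW n)) borel
                  (\<lambda>(x, y). sqrt (real n) * sample_corr n x y)) t) \<longlonglongrightarrow> char std_normal_distribution t"
    by (simp add: char_std_normal_distribution)
qed


end
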